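(* There exist absolute constants $\beta,\varepsilon\in(0,0.01)$ such that the following holds for every $n$-vertex graph $G=(V,E)$. Let $p_1<p_2<p_3$ be positions in $[\lfloor\beta n\rfloor]$, and let $P_1,P_2\subseteq[\lfloor\beta n\rfloor]$ be disjoint sets with $|P_1|=|P_2|=l\ge 10000$ and $P_1<P_2<p_1$ (i.e. $\max P_1<\min P_2$ and $\max P_2<p_1$). Put $t_2:=\max P_2$. Let $S\subseteq[\lfloor\beta n\rfloor]\setminus(P_1\cup P_2\cup\{p_2,p_3\})$ with $p_1\in S$, and let $S_2:=S\cup[t_2]\cup\{p_2,p_3\}$. Let $\pi$ be a uniformly random bijection $[n]\to V$ and let $\sigma\colon S\to V$ be any injective map (so that the event $\pi|_S=\sigma$ has positive probability). Then $$\Pr\big[\exists \text{ bijection }\pi'\colon[n]\to V \text{ with } \pi'|_{S_2}=\pi|_{S_2} \text{ such that } p_1,p_2,p_3 \text{ form a dependency path w.r.t. } \pi' \;\big|\; \pi|_S=\sigma\big]\le \frac{1-\varepsilon}{(e\cdot l)^2}.$$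
   Context: For a bijection $\pi\colon[n]\to V$ ($\pi(i)$ is the vertex at position $i$), let $V^*\subseteq V$ be the MIS produced by the sequential greedy algorithm that processes $\pi(1),\dots,\pi(n)$ in this order and adds a vertex iff none of its neighbors was added before. For $v\notin V^*$, its inhibitor $\mathrm{inhib}(v)$ is the neighbor of $v$ in $V^*$ with minimum position. Positions $p_1<p_2<p_3$ form a dependency path (of length 3) w.r.t. $\pi$ if $(\pi(p_1),\pi(p_2),\pi(p_3))$ is a path in $G$, $\pi(p_1),\pi(p_3)\in V^*$, $\pi(p_2)\notin V^*$, and $\pi(p_1)=\mathrm{inhib}(\pi(p_2))$. For sets of integers, $X<Y$ means $\max X<\min Y$, and $[t]=\{1,\dots,t\}$. *)

theory Defs
  imports Complex_Main
begin

text \<open>Graphs: vertex set V (finite set of naturals), edge relation E (symmetric, irreflexive).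
Orderings: bijections pi from positions {1..n} onto V, n = card V, made extensional
(value undefined outside {1..n}) so that the set of orderings is finite.\<close>

definition orderings :: "nat set \<Rightarrow> (nat \<Rightarrow> nat) set" where
  "orderings V = {\<pi>. bij_betw \<pi> {1..card V} V \<and> (\<forall>i. i \<notin> {1..card V} \<longrightarrow> \<pi> i = undefined)}"

primrec greedy_aux :: "(nat \<Rightarrow> nat \<Rightarrow> bool) \<Rightarrow> nat list \<Rightarrow> nat set \<Rightarrow> nat set" where
  "greedy_aux E [] A = A"
| "greedy_aux E (v # vs) A =
     greedy_aux E vs (if \<exists>u\<in>A. E u v then A else insert v A)"

definition greedy_mis :: "(nat \<Rightarrow> nat \<Rightarrow> bool) \<Rightarrow> nat \<Rightarrow> (nat \<Rightarrow> nat) \<Rightarrow> nat set" where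
  "greedy_mis E n \<pi> = greedy_aux E (map \<pi> [1..<n+1]) {}"

definition inhib :: "(nat \<Rightarrow> nat \<Rightarrow> bool) \<Rightarrow> nat \<Rightarrow> (nat \<Rightarrow> nat) \<Rightarrow> nat \<Rightarrow> nat" where
  "inhib E n \<pi> v = \<pi> (LEAST q. q \<in> {1..n} \<and> \<pi> q \<in> greedy_mis E n \<pi> \<and> E (\<pi> q) v)"

definition dep_path :: "(nat \<Rightarrow> nat \<Rightarrow> bool) \<Rightarrow> nat \<Rightarrow> (nat \<Rightarrow> nat) \<Rightarrow> nat \<Rightarrow> nat \<Rightarrow> nat \<Rightarrow> bool" where
  "dep_path E n \<pi> p1 p2 p3 \<longleftrightarrow>
     p1 < p2 \<and> p2 < p3 \<and>
     E (\<pi> p1) (\<pi> p2) \<and> E (\<pi> p2) (\<pi> p3) \<and>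
     \<pi> p1 \<in> greedy_mis E n \<pi> \<and> \<pi> p3 \<in> greedy_mis E n \<pi> \<and>
     \<pi> p2 \<notin> greedy_mis E n \<pi> \<and>
     \<pi> p1 = inhib E n \<pi> (\<pi> p2)"

definition cond_prob :: "nat set \<Rightarrow> ((nat \<Rightarrow> nat) \<Rightarrow> bool) \<Rightarrow> ((nat \<Rightarrow> nat) \<Rightarrow> bool) \<Rightarrow> real" where
  "cond_prob V A B =
     real (card {\<pi> \<in> orderings V. A \<pi> \<and> B \<pi>}) / real (card {\<pi> \<in> orderings V. B \<pi>})"

end

theory Submission imports Defs "HOL-Library.FuncSet" begin

definition Mq :: "(nat \<Rightarrow> nat \<Rightarrow> bool) \<Rightarrow> (nat \<Rightarrow> nat) \<Rightarrow> nat \<Rightarrow> nat set" where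
  "Mq E \<pi> q = greedy_aux E (map \<pi> [1..<q]) {}"

lemma greedy_aux_append: "greedy_aux E (xs @ ys) A = greedy_aux E ys (greedy_aux E xs A)"
  by (induction xs arbitrary: A) auto

lemma Mq_Suc: "1 \<le> q \<Longrightarrow> Mq E \<pi> (Suc q) =
   (if \<exists>u\<in>Mq E \<pi> q. E u (\<pi> q) then Mq E \<pi> q else insert (\<pi> q) (Mq E \<pi> q))"
proof -
  assume "1 \<le> q"
  then have "[1..<Suc q] = [1..<q] @ [q]" by (simp only: upt_Suc if_True)
  then have "map \<pi> [1..<Suc q] = map \<pi> [1..<q] @ [\<pi> q]" by simp
  then show ?thesis unfolding Mq_def by (simp only: greedy_aux_append greedy_aux.simps)
qed

lemma Mq_cong: "(\<And>i. 1 \<le> i \<Longrightarrow> i < q \<Longrightarrow> \<pi> i = \<pi>' i) \<Longrightarrow> Mq E \<pi> q = Mq E \<pi>' q"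
proof -
  assume h: "\<And>i. 1 \<le> i \<Longrightarrow> i < q \<Longrightarrow> \<pi> i = \<pi>' i"
  have "map \<pi> [1..<q] = map \<pi>' [1..<q]"
    by (rule map_cong) (auto intro: h)
  then show ?thesis unfolding Mq_def by (rule arg_cong)
qed

lemma greedy_aux_mono: "A \<subseteq> greedy_aux E xs A"
proof (induction xs arbitrary: A)
  case Nil then show ?case by simp
next
  case (Cons x xs)
  define B where "B = (if \<exists>u\<in>A. E u x then A else insert x A)"
  have 1: "greedy_aux E (x#xs) A = greedy_aux E xs B" by (simp add: B_def)
  have 2: "B \<subseteq> greedy_aux E xs B" by (rule Cons.IH)
  have 3: "A \<subseteq> B" by (simp add: B_def subset_insertI)
  show ?case unfolding 1 using 2 3 by (rule subset_trans[rotated])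
qed

lemma greedy_aux_sub: "greedy_aux E xs A \<subseteq> A \<union> set xs"
proof (induction xs arbitrary: A)
  case Nil then show ?case by simp
next
  case (Cons x xs)
  define B where "B = (if \<exists>u\<in>A. E u x then A else insert x A)"
  have 1: "greedy_aux E (x#xs) A = greedy_aux E xs B" by (simp add: B_def)
  have 2: "greedy_aux E xs B \<subseteq> B \<union> set xs" by (rule Cons.IH)
  have 3: "B \<subseteq> insert x A" by (simp add: B_def subset_insertI)
  show ?case unfolding 1 using 2 3 by auto
qed

lemma Mq_mono: "q \<le> q' \<Longrightarrow> Mq E \<pi> q \<subseteq> Mq E \<pi> q'"
proof (cases "q \<le> 1")
  case True then have "[1..<q] = []" by simp
  then have "Mq E \<pi> q = {}" unfolding Mq_def by (simp only: list.map) simp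
  then show ?thesis by simp
next
  case False
  assume "q \<le> q'"
  then obtain k where k: "q' = q + k" using le_Suc_ex by blast
  have "[1..<q'] = [1..<q] @ [q..<q']" unfolding k
    by (rule upt_add_eq_append) (use False in simp)
  then have "greedy_aux E (map \<pi> [1..<q']) {} = greedy_aux E (map \<pi> [q..<q']) (greedy_aux E (map \<pi> [1..<q]) {})"
    by (simp only: map_append greedy_aux_append)
  moreover have "greedy_aux E (map \<pi> [1..<q]) {} \<subseteq> greedy_aux E (map \<pi> [q..<q']) (greedy_aux E (map \<pi> [1..<q]) {})"
    by (rule greedy_aux_mono)
  ultimately show ?thesis unfolding Mq_def by simp
qed

lemma Mq_sub: "Mq E \<pi> q \<subseteq> \<pi> ` {1..<q}"
proof -
  have "set (map \<pi> [1..<q]) = \<pi> ` {1..<q}" by simp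
  then show ?thesis unfolding Mq_def using greedy_aux_sub[of E "map \<pi> [1..<q]" "{}"] by simp
qed

lemma greedy_mis_Mq: "greedy_mis E n \<pi> = Mq E \<pi> (Suc n)"
  unfolding greedy_mis_def Mq_def by simp

lemma greedy_aux_indep:
  assumes sym: "\<forall>u v. E u v \<longrightarrow> E v u" and irr: "\<forall>v. \<not> E v v"
  shows "\<forall>u\<in>A. \<forall>w\<in>A. \<not> E u w \<Longrightarrow> \<forall>u\<in>greedy_aux E xs A. \<forall>w\<in>greedy_aux E xs A. \<not> E u w"
proof (induction xs arbitrary: A)
  case Nil then show ?case by simp
next
  case (Cons x xs)
  define B where "B = (if \<exists>u\<in>A. E u x then A else insert x A)"
  have 1: "greedy_aux E (x#xs) A = greedy_aux E xs B" by (simp add: B_def)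
  have 3: "\<forall>u\<in>B. \<forall>w\<in>B. \<not> E u w"
  proof (cases "\<exists>u\<in>A. E u x")
    case True then show ?thesis using Cons.prems by (simp add: B_def)
  next
    case False
    then have B: "B = insert x A" by (simp add: B_def)
    show ?thesis unfolding B using False Cons.prems sym irr by (simp, blast)
  qed
  show ?case unfolding 1 by (rule Cons.IH[OF 3])
qed


definition sw :: "nat \<Rightarrow> nat \<Rightarrow> nat \<Rightarrow> nat" where
  "sw x y v = (if v = x then y else if v = y then x else v)"

lemma sw_sw[simp]: "sw x y (sw x y v) = v"
  unfolding sw_def by auto

lemma sw_in: "x \<in> A \<Longrightarrow> y \<in> A \<Longrightarrow> v \<in> A \<Longrightarrow> sw x y v \<in> A"
  unfolding sw_def by auto

lemma bij_sw: "x \<in> A \<Longrightarrow> y \<in> A \<Longrightarrow> bij_betw (sw x y) A A"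
  by (rule bij_betw_byWitness[where f'="sw x y"]) (auto simp: sw_in)



definition Psi :: "real \<Rightarrow> real \<Rightarrow> real" where "Psi g y = y / (1 + g * y)"

lemma Psi_diff: "1 + g * y > 0 \<Longrightarrow> 1 + g * z > 0 \<Longrightarrow> Psi g y - Psi g z = (y - z) / ((1 + g * y) * (1 + g * z))"
  unfolding Psi_def by (simp add: field_simps)

lemma Psi_tangent:
  assumes "g \<ge> 0" "y \<ge> 0" "z \<ge> 0"
  shows "Psi g y \<le> Psi g z + (y - z) / (1 + g * z)^2"
proof -
  define A where "A = 1 + g * y"
  define B where "B = 1 + g * z"
  have p: "A > 0" "B > 0" using assms unfolding A_def B_def by (auto intro: add_pos_nonneg)
  have d: "Psi g y - Psi g z = (y - z) / (A * B)" unfolding A_def B_def by (rule Psi_diff) (use p A_def B_def in auto)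
  have "(y - z) / (A * B) \<le> (y - z) / B^2"
  proof (cases "y \<ge> z")
    case True
    then have "B^2 \<le> A * B" using p assms unfolding A_def B_def power2_eq_square
      by (intro mult_right_mono) (auto intro: mult_left_mono)
    then show ?thesis using True p by (intro divide_left_mono) auto
  next
    case False
    then have "A * B \<le> B^2" using p assms unfolding A_def B_def power2_eq_square
      by (intro mult_right_mono) (auto intro: mult_left_mono)
    then show ?thesis using False p by (intro divide_left_mono_neg) auto
  qed
  then show ?thesis using d unfolding B_def by linarith
qed

lemma Psi_mono: "g \<ge> 0 \<Longrightarrow> 0 \<le> y \<Longrightarrow> y \<le> z \<Longrightarrow> Psi g y \<le> Psi g z"
proof -
  assume a: "g \<ge> 0" "0 \<le> y" "y \<le> z"
  have p: "1 + g * y > 0" "1 + g * z > 0" using a by (auto intro: add_pos_nonneg)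
  have "Psi g z - Psi g y = (z - y) / ((1 + g * z) * (1 + g * y))" by (rule Psi_diff) (use p in auto)
  moreover have "(z - y) / ((1 + g * z) * (1 + g * y)) \<ge> 0" using p a by simp
  ultimately show ?thesis by linarith
qed

lemma Psi_nonneg: "g \<ge> 0 \<Longrightarrow> 0 \<le> y \<Longrightarrow> 0 \<le> Psi g y"
  unfolding Psi_def by simp

lemma Psi_zero: "Psi 0 y = y" unfolding Psi_def by simp

lemma Psi_jensen:
  assumes "finite P" "P \<noteq> {}" "g \<ge> 0" "\<And>x. x \<in> P \<Longrightarrow> f x \<ge> 0"
  shows "(\<Sum>x\<in>P. Psi g (f x)) / real (card P) \<le> Psi g ((\<Sum>x\<in>P. f x) / real (card P))"
proof -
  define z where "z = (\<Sum>x\<in>P. f x) / real (card P)"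
  have cp: "real (card P) > 0" using assms by auto
  have z0: "z \<ge> 0" unfolding z_def using assms by (simp add: sum_nonneg)
  have "(\<Sum>x\<in>P. Psi g (f x)) \<le> (\<Sum>x\<in>P. Psi g z + (f x - z) / (1 + g * z)^2)"
    by (rule sum_mono) (rule Psi_tangent, use assms z0 in auto)
  also have "\<dots> = real (card P) * Psi g z + ((\<Sum>x\<in>P. f x) - real (card P) * z) / (1 + g * z)^2"
    by (simp add: sum.distrib sum_subtractf sum_divide_distrib[symmetric])
  also have "(\<Sum>x\<in>P. f x) - real (card P) * z = 0" unfolding z_def using cp by simp
  finally have "(\<Sum>x\<in>P. Psi g (f x)) \<le> real (card P) * Psi g z" by simp
  then show ?thesis unfolding z_def[symmetric] using cp by (simp add: divide_le_eq mult.commute)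
qed

lemma Psi_shift:
  assumes "g \<ge> 0" "d \<ge> 0" "Y \<ge> 0" "Y - d * Y^2 \<ge> 0"
  shows "Psi g (Y - d * Y^2) \<le> Psi (g + d) Y"
proof -
  have p1: "1 + g * (Y - d * Y^2) > 0" using assms by (auto intro: add_pos_nonneg)
  have p2: "1 + (g + d) * Y > 0" using assms by (auto intro: add_pos_nonneg)
  have "(Y - d * Y^2) * (1 + (g + d) * Y) \<le> Y * (1 + g * (Y - d * Y^2))"
  proof -
    have "Y * (1 + g * (Y - d * Y^2)) - (Y - d * Y^2) * (1 + (g + d) * Y) = d^2 * Y^3"
      by (simp add: algebra_simps power2_eq_square power3_eq_cube)
    moreover have "d^2 * Y^3 \<ge> 0" using assms by simp
    ultimately show ?thesis by linarith
  qed
  then show ?thesis unfolding Psi_def using p1 p2 by (simp add: divide_simps)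
qed

lemma ue_bound: "(u::real) \<ge> 0 \<Longrightarrow> u * exp (- u) \<le> exp (- 1)"
proof -
  assume u: "u \<ge> 0"
  have "u \<le> exp (u - 1)" using exp_ge_add_one_self[of "u - 1"] by simp
  then have "u * exp (- u) \<le> exp (u - 1) * exp (- u)" by (simp add: mult_right_mono)
  also have "\<dots> = exp (- 1)" by (simp add: exp_add[symmetric])
  finally show ?thesis .
qed

lemma term_bound:
  fixes n r :: nat and x :: real
  assumes "n > 0" "r \<ge> 1" "0 \<le> x" "x \<le> real n"
  shows "x * (1 - x / real n)^r \<le> real n / (exp 1 * real r)"
proof -
  define t where "t = x / real n"
  have t0: "0 \<le> t" "t \<le> 1" using assms by (auto simp: t_def divide_le_eq)
  have "(1 - t)^r \<le> exp (- t)^r"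
    by (rule power_mono) (use exp_ge_add_one_self[of "-t"] t0 in auto)
  also have "\<dots> = exp (- t * real r)" by (simp add: exp_of_nat_mult[symmetric] mult.commute)
  finally have a: "(1 - t)^r \<le> exp (- (t * real r))" by simp
  have "t * real r * exp (- (t * real r)) \<le> exp (- 1)" by (rule ue_bound) (use t0 in simp)
  then have b: "t * exp (- (t * real r)) \<le> exp (- 1) / real r"
    using assms(2) by (simp add: le_divide_eq mult.commute mult.left_commute)
  have "x * (1 - x / real n)^r = real n * (t * (1 - t)^r)" using assms(1) by (simp add: t_def)
  also have "\<dots> \<le> real n * (t * exp (- (t * real r)))"
    using a t0 by (intro mult_left_mono) auto
  also have "\<dots> \<le> real n * (exp (- 1) / real r)" using b by (intro mult_left_mono) auto
  also have "\<dots> = real n / (exp 1 * real r)" by (simp add: exp_minus field_simps)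
  finally show ?thesis .
qed


definition hh :: "nat \<Rightarrow> nat \<Rightarrow> nat \<Rightarrow> real" where
  "hh n r k = Max ((\<lambda>x. real x * (1 - real x / real n)^r) ` {0..k})"

lemma hh_ge: "x \<le> k \<Longrightarrow> real x * (1 - real x / real n)^r \<le> hh n r k"
  unfolding hh_def by (rule Max_ge) auto

lemma hh_attained: "\<exists>x\<le>k. hh n r k = real x * (1 - real x / real n)^r"
proof -
  have "Max ((\<lambda>x. real x * (1 - real x / real n)^r) ` {0..k}) \<in> (\<lambda>x. real x * (1 - real x / real n)^r) ` {0..k}"
    by (rule Max_in) auto
  then obtain x where "x \<in> {0..k}" "Max ((\<lambda>x. real x * (1 - real x / real n)^r) ` {0..k}) = real x * (1 - real x / real n)^r"
    by blast
  then show ?thesis unfolding hh_def by auto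
qed

lemma hh_nonneg: "0 \<le> hh n r k"
  using hh_ge[of 0 k n r] by simp

lemma hh_mono: "k \<le> k' \<Longrightarrow> hh n r k \<le> hh n r k'"
  using hh_attained[of k n r] hh_ge[of _ k' n r] by force

lemma hh_zero: "hh n r 0 = 0"
  using hh_attained[of 0 n r] by auto

lemma hh_r0: "hh n 0 k = real k"
  using hh_attained[of k n 0] hh_ge[of k k n 0] by auto

lemma hh_step:
  assumes "k \<le> n"
  shows "(1 - real k / real n) * hh n r k \<le> hh n (Suc r) k"
proof -
  obtain x where x: "x \<le> k" "hh n r k = real x * (1 - real x / real n)^r" using hh_attained by blast
  have xn: "real x \<le> real n" using x assms by simp
  have f0: "0 \<le> real x * (1 - real x / real n)^r"
  proof (cases "n = 0")
    case True then show ?thesis by simp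
  next
    case False then show ?thesis using xn by (simp add: divide_le_eq)
  qed
  have "1 - real k / real n \<le> 1 - real x / real n" using x by (simp add: divide_right_mono)
  then have "(1 - real k / real n) * hh n r k \<le> (1 - real x / real n) * (real x * (1 - real x / real n)^r)"
    unfolding x(2) using f0 by (rule mult_right_mono)
  also have "\<dots> = real x * (1 - real x / real n)^(Suc r)" by simp
  also have "\<dots> \<le> hh n (Suc r) k" using x(1) by (rule hh_ge)
  finally show ?thesis .
qed

lemma hh_bound:
  assumes "n > 0" "r \<ge> 1" "k \<le> n"
  shows "hh n r k \<le> real n / (exp 1 * real r)"
proof -
  obtain x where x: "x \<le> k" "hh n r k = real x * (1 - real x / real n)^r" using hh_attained by blast
  show ?thesis unfolding x(2) by (rule term_bound) (use assms x in auto)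
qed


lemma sum_if_sub: "finite W \<Longrightarrow> A \<subseteq> W \<Longrightarrow> (\<Sum>y\<in>W. if y \<in> A then f y else 0) = (\<Sum>y\<in>A. f y)"
proof -
  assume fW: "finite W" and "A \<subseteq> W"
  have "sum f (W \<inter> A) = (\<Sum>y\<in>W. if y \<in> A then f y else 0)" using fW by (rule sum.inter_restrict)
  moreover have "W \<inter> A = A" using \<open>A \<subseteq> W\<close> by auto
  ultimately show ?thesis by simp
qed

locale ctx =
  fixes V :: "nat set" and S :: "nat set" and \<sigma> :: "nat \<Rightarrow> nat"
  assumes finV: "finite V" and S_sub: "S \<subseteq> {1..card V}"
begin

definition Om :: "(nat \<Rightarrow> nat) set" where
  "Om = {\<pi> \<in> orderings V. \<forall>i\<in>S. \<pi> i = \<sigma> i}"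

definition pool :: "(nat \<Rightarrow> nat) \<Rightarrow> nat set \<Rightarrow> nat set" where
  "pool \<pi> J = V - \<pi> ` J - \<sigma> ` S"

definition TT :: "nat \<Rightarrow> nat \<Rightarrow> (nat \<Rightarrow> nat) \<Rightarrow> (nat \<Rightarrow> nat)" where
  "TT x y \<pi> = (\<lambda>i. if i \<in> {1..card V} then sw x y (\<pi> i) else \<pi> i)"

lemma finite_Om: "finite Om"
proof -
  have "Om \<subseteq> Pi\<^sub>E {1..card V} (\<lambda>_. V)"
  proof
    fix \<pi> assume "\<pi> \<in> Om"
    then have b: "bij_betw \<pi> {1..card V} V" and u: "\<forall>i. i \<notin> {1..card V} \<longrightarrow> \<pi> i = undefined"
      unfolding Om_def orderings_def by auto
    show "\<pi> \<in> Pi\<^sub>E {1..card V} (\<lambda>_. V)"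
      using bij_betwE[OF b] u unfolding PiE_def extensional_def by auto
  qed
  moreover have "finite (Pi\<^sub>E {1..card V} (\<lambda>_. V))"
    by (rule finite_PiE) (auto simp: finV)
  ultimately show ?thesis by (rule finite_subset)
qed

lemma OmD:
  assumes "\<pi> \<in> Om"
  shows "bij_betw \<pi> {1..card V} V" "inj_on \<pi> {1..card V}" "\<pi> ` {1..card V} = V"
    "\<And>i. i \<in> S \<Longrightarrow> \<pi> i = \<sigma> i" "\<And>i. i \<notin> {1..card V} \<Longrightarrow> \<pi> i = undefined"
  using assms unfolding Om_def orderings_def bij_betw_def by auto

lemma Om_sigmaS: "\<pi> \<in> Om \<Longrightarrow> \<sigma> ` S = \<pi> ` S"
  using OmD(4) by (auto simp: image_def)

lemma TT_TT: "TT x y (TT x y \<pi>) = \<pi>"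
  unfolding TT_def by auto

lemma TT_Om:
  assumes "\<pi> \<in> Om" "x \<in> V - \<sigma> ` S" "y \<in> V - \<sigma> ` S"
  shows "TT x y \<pi> \<in> Om"
proof -
  have b: "bij_betw \<pi> {1..card V} V" using OmD[OF assms(1)] by simp
  have "bij_betw (sw x y \<circ> \<pi>) {1..card V} V"
    using bij_betw_trans[OF b bij_sw] assms by auto
  then have b2: "bij_betw (TT x y \<pi>) {1..card V} V"
    by (rule bij_betw_cong[THEN iffD1, rotated]) (simp add: TT_def)
  have "\<forall>i. i \<notin> {1..card V} \<longrightarrow> TT x y \<pi> i = undefined"
    using OmD(5)[OF assms(1)] by (simp add: TT_def)
  moreover have "\<forall>i\<in>S. TT x y \<pi> i = \<sigma> i"
  proof
    fix i assume i: "i \<in> S"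
    then have "\<pi> i = \<sigma> i" "i \<in> {1..card V}" using OmD(4)[OF assms(1)] S_sub by auto
    moreover have "\<sigma> i \<noteq> x" "\<sigma> i \<noteq> y" using assms(2,3) i by auto
    ultimately show "TT x y \<pi> i = \<sigma> i" by (simp add: TT_def sw_def)
  qed
  ultimately show ?thesis using b2 unfolding Om_def orderings_def by auto
qed

lemma TT_bij: "x \<in> V - \<sigma> ` S \<Longrightarrow> y \<in> V - \<sigma> ` S \<Longrightarrow> bij_betw (TT x y) Om Om"
  by (rule bij_betw_byWitness[where f'="TT x y"]) (auto simp: TT_TT TT_Om)

lemma pool_sub: "pool \<pi> J \<subseteq> V - \<sigma> ` S"
  unfolding pool_def by auto

lemma pool_cong: "(\<forall>i\<in>J. \<pi> i = \<pi>' i) \<Longrightarrow> pool \<pi> J = pool \<pi>' J"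
  unfolding pool_def by (metis image_cong)

lemma q_in_pool:
  assumes "\<pi> \<in> Om" "q \<in> {1..card V}" "q \<notin> S" "q \<notin> J" "J \<subseteq> {1..card V}"
  shows "\<pi> q \<in> pool \<pi> J"
proof -
  have inj: "inj_on \<pi> {1..card V}" and im: "\<pi> ` {1..card V} = V" using OmD[OF assms(1)] by auto
  have "\<pi> q \<in> V" using im assms(2) by auto
  moreover have "\<pi> q \<notin> \<pi> ` J"
    using inj assms(2,4,5) by (auto dest: inj_onD)
  moreover have "\<pi> q \<notin> \<pi> ` S"
    using inj assms(2,3) S_sub by (auto dest: inj_onD)
  ultimately show ?thesis unfolding pool_def using Om_sigmaS[OF assms(1)] by auto
qed

lemma TT_agree:
  assumes "x \<in> pool \<pi> J" "y \<in> pool \<pi> J" "J \<subseteq> {1..card V}"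
  shows "\<forall>i\<in>J. TT x y \<pi> i = \<pi> i"
proof
  fix i assume i: "i \<in> J"
  then have "\<pi> i \<noteq> x" "\<pi> i \<noteq> y" using assms unfolding pool_def by auto
  then show "TT x y \<pi> i = \<pi> i" using i assms(3) by (auto simp: TT_def sw_def)
qed

lemma avg:
  fixes G :: "(nat \<Rightarrow> nat) \<Rightarrow> nat \<Rightarrow> real"
  assumes q: "q \<in> {1..card V}" "q \<notin> S" "q \<notin> J" and J: "J \<subseteq> {1..card V}"
    and G: "\<And>\<pi> \<pi>' z. \<forall>i\<in>J. \<pi> i = \<pi>' i \<Longrightarrow> G \<pi> z = G \<pi>' z"
  shows "(\<Sum>\<pi>\<in>Om. G \<pi> (\<pi> q)) = (\<Sum>\<pi>\<in>Om. (\<Sum>x\<in>pool \<pi> J. G \<pi> x) / real (card (pool \<pi> J)))"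
proof -
  define W where "W = V - \<sigma> ` S"
  have finW: "finite W" unfolding W_def using finV by simp
  define F1 where "F1 x y \<pi> = (if x \<in> pool \<pi> J \<and> y \<in> pool \<pi> J \<and> \<pi> q = x
     then G \<pi> x / real (card (pool \<pi> J)) else 0)" for x y \<pi>
  define F2 where "F2 x y \<pi> = (if x \<in> pool \<pi> J \<and> y \<in> pool \<pi> J \<and> \<pi> q = y
     then G \<pi> x / real (card (pool \<pi> J)) else 0)" for x y \<pi>
  have poolW: "pool \<pi> J \<subseteq> W" for \<pi> using pool_sub W_def by simp
  have finP: "finite (pool \<pi> J)" for \<pi> using poolW finW finite_subset by blast
  have a: "G \<pi> (\<pi> q) = (\<Sum>x\<in>W. \<Sum>y\<in>W. F1 x y \<pi>)" if \<pi>: "\<pi> \<in> Om" for \<pi>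
  proof -
    have qp: "\<pi> q \<in> pool \<pi> J" using q_in_pool[OF \<pi> q J] .
    then have cpos: "card (pool \<pi> J) > 0" using finP card_gt_0_iff by blast
    have "(\<Sum>y\<in>W. F1 x y \<pi>) = (if x \<in> pool \<pi> J \<and> \<pi> q = x then G \<pi> x else 0)" for x
    proof (cases "x \<in> pool \<pi> J \<and> \<pi> q = x")
      case True
      then have "(\<Sum>y\<in>W. F1 x y \<pi>) = (\<Sum>y\<in>W. if y \<in> pool \<pi> J then G \<pi> x / real (card (pool \<pi> J)) else 0)"
        unfolding F1_def by (intro sum.cong) auto
      also have "\<dots> = (\<Sum>y\<in>pool \<pi> J. G \<pi> x / real (card (pool \<pi> J)))"
        by (rule sum_if_sub[OF finW poolW])
      also have "\<dots> = G \<pi> x" using cpos by simp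
      finally show ?thesis using True by simp
    next
      case False then show ?thesis unfolding F1_def by auto
    qed
    then have "(\<Sum>x\<in>W. \<Sum>y\<in>W. F1 x y \<pi>) = (\<Sum>x\<in>W. if x = \<pi> q then G \<pi> x else 0)"
      using qp by (intro sum.cong) auto
    also have "\<dots> = G \<pi> (\<pi> q)" using qp poolW[of \<pi>] finW by (simp add: sum.delta' subset_iff)
    finally show ?thesis by simp
  qed
  have b: "(\<Sum>x\<in>pool \<pi> J. G \<pi> x) / real (card (pool \<pi> J)) = (\<Sum>x\<in>W. \<Sum>y\<in>W. F2 x y \<pi>)"
    if \<pi>: "\<pi> \<in> Om" for \<pi>
  proof -
    have qp: "\<pi> q \<in> pool \<pi> J" using q_in_pool[OF \<pi> q J] .
    have "(\<Sum>y\<in>W. F2 x y \<pi>) = (if x \<in> pool \<pi> J then G \<pi> x / real (card (pool \<pi> J)) else 0)" for x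
    proof -
      have "(\<Sum>y\<in>W. F2 x y \<pi>) = (\<Sum>y\<in>W. if y = \<pi> q then (if x \<in> pool \<pi> J then G \<pi> x / real (card (pool \<pi> J)) else 0) else 0)"
        unfolding F2_def using qp by (intro sum.cong) auto
      also have "\<dots> = (if x \<in> pool \<pi> J then G \<pi> x / real (card (pool \<pi> J)) else 0)"
        using qp poolW[of \<pi>] finW by (simp add: sum.delta' subset_iff)
      finally show ?thesis .
    qed
    then have "(\<Sum>x\<in>W. \<Sum>y\<in>W. F2 x y \<pi>) = (\<Sum>x\<in>W. if x \<in> pool \<pi> J then G \<pi> x / real (card (pool \<pi> J)) else 0)"
      by simp
    also have "\<dots> = (\<Sum>x\<in>pool \<pi> J. G \<pi> x / real (card (pool \<pi> J)))"
      by (rule sum_if_sub[OF finW poolW])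
    also have "\<dots> = (\<Sum>x\<in>pool \<pi> J. G \<pi> x) / real (card (pool \<pi> J))"
      by (simp add: sum_divide_distrib)
    finally show ?thesis by simp
  qed
  have c: "(\<Sum>\<pi>\<in>Om. F2 x y \<pi>) = (\<Sum>\<pi>\<in>Om. F1 x y \<pi>)" if xy: "x \<in> W" "y \<in> W" for x y
  proof -
    have key: "F2 x y (TT x y \<pi>) = F1 x y \<pi>" if \<pi>: "\<pi> \<in> Om" for \<pi>
    proof (cases "x \<in> pool \<pi> J \<and> y \<in> pool \<pi> J")
      case True
      then have ag: "\<forall>i\<in>J. TT x y \<pi> i = \<pi> i" using TT_agree J by blast
      then have pe: "pool (TT x y \<pi>) J = pool \<pi> J" by (rule pool_cong)
      have ge: "G (TT x y \<pi>) z = G \<pi> z" for z using G[OF ag] .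
      have tq: "TT x y \<pi> q = sw x y (\<pi> q)" using q by (simp add: TT_def)
      have "(sw x y (\<pi> q) = y) = (\<pi> q = x)" unfolding sw_def by auto
      then show ?thesis unfolding F1_def F2_def pe ge tq using True by simp
    next
      case False
      have "\<not> (x \<in> pool (TT x y \<pi>) J \<and> y \<in> pool (TT x y \<pi>) J)"
      proof
        assume h: "x \<in> pool (TT x y \<pi>) J \<and> y \<in> pool (TT x y \<pi>) J"
        then have "\<forall>i\<in>J. TT x y (TT x y \<pi>) i = TT x y \<pi> i" using TT_agree J by blast
        then have "pool (TT x y (TT x y \<pi>)) J = pool (TT x y \<pi>) J" by (rule pool_cong)
        then show False using h False by (simp add: TT_TT)
      qed
      then show ?thesis using False unfolding F1_def F2_def by auto
    qed
    have xy': "x \<in> V - \<sigma> ` S" "y \<in> V - \<sigma> ` S" using xy W_def by auto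
    have "(\<Sum>\<pi>\<in>Om. F2 x y \<pi>) = (\<Sum>\<pi>\<in>Om. F2 x y (TT x y \<pi>))"
      using sum.reindex_bij_betw[OF TT_bij[OF xy'], of "F2 x y"] by simp
    also have "\<dots> = (\<Sum>\<pi>\<in>Om. F1 x y \<pi>)" using key by (intro sum.cong) auto
    finally show ?thesis .
  qed
  have "(\<Sum>\<pi>\<in>Om. G \<pi> (\<pi> q)) = (\<Sum>\<pi>\<in>Om. \<Sum>x\<in>W. \<Sum>y\<in>W. F1 x y \<pi>)"
    using a by (intro sum.cong) auto
  also have "\<dots> = (\<Sum>x\<in>W. \<Sum>y\<in>W. \<Sum>\<pi>\<in>Om. F1 x y \<pi>)"
    by (simp add: sum.swap[of _ Om] sum.swap[of _ Om W])
  also have "\<dots> = (\<Sum>x\<in>W. \<Sum>y\<in>W. \<Sum>\<pi>\<in>Om. F2 x y \<pi>)"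
    by (rule sum.cong[OF refl], rule sum.cong[OF refl], simp add: c)
  also have "\<dots> = (\<Sum>\<pi>\<in>Om. \<Sum>x\<in>W. \<Sum>y\<in>W. F2 x y \<pi>)"
    by (simp add: sum.swap[of _ Om] sum.swap[of _ Om W])
  also have "\<dots> = (\<Sum>\<pi>\<in>Om. (\<Sum>x\<in>pool \<pi> J. G \<pi> x) / real (card (pool \<pi> J)))"
    using b by (intro sum.cong) auto
  finally show ?thesis .
qed

end


locale ctx2 = ctx V S \<sigma> for V S \<sigma> +
  fixes E :: "nat \<Rightarrow> nat \<Rightarrow> bool" and p1 :: nat
  assumes symE: "\<forall>u v. E u v \<longrightarrow> E v u" and irrE: "\<forall>v. \<not> E v v"
begin

definition v1 :: nat where "v1 = \<sigma> p1"

definition unbl :: "(nat \<Rightarrow> nat) \<Rightarrow> nat \<Rightarrow> nat \<Rightarrow> bool" where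
  "unbl \<pi> q u = (\<forall>w\<in>Mq E \<pi> q. \<not> E w u)"

definition KK :: "(nat \<Rightarrow> nat) \<Rightarrow> nat \<Rightarrow> nat set" where
  "KK \<pi> q = (if unbl \<pi> q v1 then {a \<in> pool \<pi> {1..<q}. E v1 a \<and> unbl \<pi> q a} else {})"

definition LL :: "(nat \<Rightarrow> nat) \<Rightarrow> nat \<Rightarrow> nat \<Rightarrow> nat set" where
  "LL \<pi> q a = {c \<in> pool \<pi> {1..<q}. E a c \<and> \<not> E v1 c \<and> unbl \<pi> q c}"

definition YY :: "nat \<Rightarrow> (nat \<Rightarrow> nat) \<Rightarrow> nat \<Rightarrow> real" where
  "YY r \<pi> q = (\<Sum>a\<in>KK \<pi> q. hh (card V) r (card (LL \<pi> q a)))"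

lemma unbl_cong: "\<forall>i\<in>{1..<q}. \<pi> i = \<pi>' i \<Longrightarrow> unbl \<pi> q = unbl \<pi>' q"
proof -
  assume h: "\<forall>i\<in>{1..<q}. \<pi> i = \<pi>' i"
  have "Mq E \<pi> q = Mq E \<pi>' q" by (rule Mq_cong) (use h in simp)
  then show ?thesis unfolding unbl_def by simp
qed

lemma KK_cong: "\<forall>i\<in>{1..<q}. \<pi> i = \<pi>' i \<Longrightarrow> KK \<pi> q = KK \<pi>' q"
  unfolding KK_def using unbl_cong[of q \<pi> \<pi>'] pool_cong[of "{1..<q}" \<pi> \<pi>'] by simp

lemma LL_cong: "\<forall>i\<in>{1..<q}. \<pi> i = \<pi>' i \<Longrightarrow> LL \<pi> q a = LL \<pi>' q a"
  unfolding LL_def using unbl_cong[of q \<pi> \<pi>'] pool_cong[of "{1..<q}" \<pi> \<pi>'] by simp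

lemma YY_cong: "\<forall>i\<in>{1..<q}. \<pi> i = \<pi>' i \<Longrightarrow> YY r \<pi> q = YY r \<pi>' q"
  unfolding YY_def using KK_cong[of q \<pi> \<pi>'] LL_cong[of q \<pi> \<pi>'] by simp

lemma KK_pool: "KK \<pi> q \<subseteq> pool \<pi> {1..<q}"
  unfolding KK_def by auto

lemma LL_pool: "LL \<pi> q a \<subseteq> pool \<pi> {1..<q}"
  unfolding LL_def by auto

lemma KK_LL_disj: "KK \<pi> q \<inter> LL \<pi> q a = {}"
  unfolding KK_def LL_def by auto

lemma pool_V: "pool \<pi> J \<subseteq> V"
  unfolding pool_def by auto

lemma finite_pool: "finite (pool \<pi> J)"
  by (rule finite_subset[OF pool_V finV])

lemma finite_KK: "finite (KK \<pi> q)" by (rule finite_subset[OF KK_pool finite_pool])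
lemma finite_LL: "finite (LL \<pi> q a)" by (rule finite_subset[OF LL_pool finite_pool])

lemma card_pool_le: "card (pool \<pi> J) \<le> card V"
  by (rule card_mono[OF finV pool_V])

lemma card_KK_le: "card (KK \<pi> q) \<le> card V"
  by (rule le_trans[OF card_mono[OF finite_pool KK_pool] card_pool_le])

lemma card_LL_le: "card (LL \<pi> q a) \<le> card V"
  by (rule le_trans[OF card_mono[OF finite_pool LL_pool] card_pool_le])

lemma pool_Suc: "pool \<pi> {1..<Suc q} \<subseteq> pool \<pi> {1..<q}"
proof -
  have "\<pi> ` {1..<q} \<subseteq> \<pi> ` {1..<Suc q}" by (rule image_mono) auto
  then show ?thesis unfolding pool_def by blast
qed

lemma unbl_Suc: "unbl \<pi> (Suc q) u \<Longrightarrow> unbl \<pi> q u"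
proof -
  have "Mq E \<pi> q \<subseteq> Mq E \<pi> (Suc q)" by (rule Mq_mono) simp
  then show "unbl \<pi> (Suc q) u \<Longrightarrow> unbl \<pi> q u" unfolding unbl_def by blast
qed

lemma KK_Suc: "KK \<pi> (Suc q) \<subseteq> KK \<pi> q"
proof
  fix a assume "a \<in> KK \<pi> (Suc q)"
  then have "unbl \<pi> (Suc q) v1" "a \<in> pool \<pi> {1..<Suc q}" "E v1 a" "unbl \<pi> (Suc q) a"
    unfolding KK_def by (simp_all split: if_splits)
  then have "unbl \<pi> q v1" "a \<in> pool \<pi> {1..<q}" "E v1 a" "unbl \<pi> q a"
    using pool_Suc[of \<pi> q] unbl_Suc[of \<pi> q] by blast+
  then show "a \<in> KK \<pi> q" unfolding KK_def by simp
qed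

lemma LL_Suc: "LL \<pi> (Suc q) a \<subseteq> LL \<pi> q a"
proof
  fix c assume "c \<in> LL \<pi> (Suc q) a"
  then have "c \<in> pool \<pi> {1..<Suc q}" "E a c" "\<not> E v1 c" "unbl \<pi> (Suc q) c"
    unfolding LL_def by simp_all
  then have "c \<in> pool \<pi> {1..<q}" "E a c" "\<not> E v1 c" "unbl \<pi> q c"
    using pool_Suc[of \<pi> q] unbl_Suc[of \<pi> q] by blast+
  then show "c \<in> LL \<pi> q a" unfolding LL_def by simp
qed

lemma Mq_Suc_unbl: "1 \<le> q \<Longrightarrow> unbl \<pi> q (\<pi> q) \<Longrightarrow> \<pi> q \<in> Mq E \<pi> (Suc q)"
proof -
  assume q: "1 \<le> q" and u: "unbl \<pi> q (\<pi> q)"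
  then have "\<not> (\<exists>u\<in>Mq E \<pi> q. E u (\<pi> q))" unfolding unbl_def by simp
  then show ?thesis using Mq_Suc[OF q, of E \<pi>] by simp
qed

lemma KK_hit: "1 \<le> q \<Longrightarrow> \<pi> q \<in> KK \<pi> q \<Longrightarrow> KK \<pi> (Suc q) = {}"
proof -
  assume q: "1 \<le> q" and h: "\<pi> q \<in> KK \<pi> q"
  then have u: "unbl \<pi> q (\<pi> q)" and e: "E v1 (\<pi> q)" unfolding KK_def by (auto split: if_splits)
  have "\<pi> q \<in> Mq E \<pi> (Suc q)" by (rule Mq_Suc_unbl[OF q u])
  moreover have "E (\<pi> q) v1" using e symE by blast
  ultimately have "\<not> unbl \<pi> (Suc q) v1" unfolding unbl_def by blast
  then show ?thesis unfolding KK_def by simp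
qed

lemma LL_hit: "1 \<le> q \<Longrightarrow> \<pi> q \<in> LL \<pi> q a \<Longrightarrow> a \<notin> KK \<pi> (Suc q)"
proof -
  assume q: "1 \<le> q" and h: "\<pi> q \<in> LL \<pi> q a"
  then have u: "unbl \<pi> q (\<pi> q)" and e: "E a (\<pi> q)" unfolding LL_def by auto
  have "\<pi> q \<in> Mq E \<pi> (Suc q)" by (rule Mq_Suc_unbl[OF q u])
  moreover have "E (\<pi> q) a" using e symE by blast
  ultimately have "\<not> unbl \<pi> (Suc q) a" unfolding unbl_def by blast
  then show ?thesis unfolding KK_def by (auto split: if_splits)
qed

lemma YY_Suc: "YY r \<pi> (Suc q) \<le> YY r \<pi> q"
proof -
  have "YY r \<pi> (Suc q) \<le> (\<Sum>a\<in>KK \<pi> (Suc q). hh (card V) r (card (LL \<pi> q a)))"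
    unfolding YY_def
    by (rule sum_mono, rule hh_mono, rule card_mono[OF finite_LL LL_Suc])
  also have "\<dots> \<le> YY r \<pi> q" unfolding YY_def
    by (rule sum_mono2[OF finite_KK KK_Suc]) (simp add: hh_nonneg)
  finally show ?thesis .
qed

lemma YY_nonneg: "0 \<le> YY r \<pi> q"
  unfolding YY_def by (simp add: sum_nonneg hh_nonneg)

lemma YY_bound:
  assumes "card V > 0" "r \<ge> 1"
  shows "YY r \<pi> q \<le> real (card (KK \<pi> q)) * (real (card V) / (exp 1 * real r))"
proof -
  have "YY r \<pi> q \<le> (\<Sum>a\<in>KK \<pi> q. real (card V) / (exp 1 * real r))"
    unfolding YY_def by (rule sum_mono, rule hh_bound) (use assms card_LL_le in auto)
  then show ?thesis by simp
qed


lemma sum_if_notin: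
  fixes h :: real
  assumes "finite P" "K \<subseteq> P"
  shows "(\<Sum>x\<in>P. if x \<in> K then 0 else h) = real (card P - card K) * h"
proof -
  have "(\<Sum>x\<in>P. if x \<in> K then 0 else h) = (\<Sum>x\<in>P. if x \<notin> K then h else 0)"
    by (rule sum.cong) auto
  also have "\<dots> = sum (\<lambda>_. h) {x\<in>P. x \<notin> K}" using sum.inter_filter[OF assms(1), of "\<lambda>_. h" "\<lambda>x. x \<notin> K"] by simp
  also have "{x\<in>P. x \<notin> K} = P - K" by auto
  finally have e: "(\<Sum>x\<in>P. if x \<in> K then 0 else h) = real (card (P - K)) * h" by simp
  have "card (P - K) = card P - card K"
    by (rule card_Diff_subset[OF finite_subset[OF assms(2) assms(1)] assms(2)])
  then show ?thesis using e by simp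
qed

lemma stepA:
  assumes q: "q \<in> {1..card V}" "q \<notin> S" and g: "g \<ge> 0" and c: "c \<ge> 0"
  shows "(\<Sum>\<pi>\<in>Om. Psi g (c * hh (card V) r (card (KK \<pi> (Suc q)))))
       \<le> (\<Sum>\<pi>\<in>Om. Psi g (c * hh (card V) (Suc r) (card (KK \<pi> q))))"
proof -
  define J where "J = {1..<q}"
  have J: "J \<subseteq> {1..card V}" "q \<notin> J" using q unfolding J_def by auto
  define G where "G \<pi> x = Psi g (c * hh (card V) r (card (KK (\<pi>(q:=x)) (Suc q))))" for \<pi> x
  have Ginv: "G \<pi> z = G \<pi>' z" if "\<forall>i\<in>J. \<pi> i = \<pi>' i" for \<pi> \<pi>' z
  proof -
    have "\<forall>i\<in>{1..<Suc q}. (\<pi>(q:=z)) i = (\<pi>'(q:=z)) i" using that unfolding J_def by auto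
    then have "KK (\<pi>(q:=z)) (Suc q) = KK (\<pi>'(q:=z)) (Suc q)" by (rule KK_cong)
    then show ?thesis unfolding G_def by simp
  qed
  have 1: "(\<Sum>\<pi>\<in>Om. G \<pi> (\<pi> q)) = (\<Sum>\<pi>\<in>Om. (\<Sum>x\<in>pool \<pi> J. G \<pi> x) / real (card (pool \<pi> J)))"
    by (rule avg[OF q J(2) J(1)]) (rule Ginv)
  have 2: "G \<pi> (\<pi> q) = Psi g (c * hh (card V) r (card (KK \<pi> (Suc q))))" for \<pi> unfolding G_def by simp
  have 3: "(\<Sum>x\<in>pool \<pi> J. G \<pi> x) / real (card (pool \<pi> J)) \<le> Psi g (c * hh (card V) (Suc r) (card (KK \<pi> q)))"
    if \<pi>: "\<pi> \<in> Om" for \<pi>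
  proof -
    define P where "P = pool \<pi> J"
    define k where "k = card (KK \<pi> q)"
    have qP: "\<pi> q \<in> P" unfolding P_def by (rule q_in_pool[OF \<pi> q J(2) J(1)])
    have finP: "finite P" unfolding P_def by (rule finite_pool)
    have Pne: "P \<noteq> {}" using qP by auto
    have KP: "KK \<pi> q \<subseteq> P" unfolding P_def J_def by (rule KK_pool)
    have kn: "k \<le> card V" unfolding k_def by (rule card_KK_le)
    have Pn: "card P \<le> card V" unfolding P_def by (rule card_pool_le)
    have kP: "k \<le> card P" unfolding k_def by (rule card_mono[OF finP KP])
    have cP: "real (card P) > 0" using finP Pne by (simp add: card_gt_0_iff)
    have each: "hh (card V) r (card (KK (\<pi>(q:=x)) (Suc q))) \<le> (if x \<in> KK \<pi> q then 0 else hh (card V) r k)" for x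
    proof -
      have ag: "\<forall>i\<in>{1..<q}. (\<pi>(q:=x)) i = \<pi> i" by simp
      have Kx: "KK (\<pi>(q:=x)) q = KK \<pi> q" using KK_cong[OF ag] .
      show ?thesis
      proof (cases "x \<in> KK \<pi> q")
        case True
        then have "(\<pi>(q:=x)) q \<in> KK (\<pi>(q:=x)) q" using Kx by simp
        then have "KK (\<pi>(q:=x)) (Suc q) = {}" by (rule KK_hit[rotated]) (use q in simp)
        then show ?thesis using True by (simp add: hh_zero)
      next
        case False
        have "card (KK (\<pi>(q:=x)) (Suc q)) \<le> k" unfolding k_def
          using card_mono[OF finite_KK KK_Suc[of "\<pi>(q:=x)" q]] Kx by simp
        then show ?thesis using False by (simp add: hh_mono)
      qed
    qed
    have j: "(\<Sum>x\<in>P. G \<pi> x) / real (card P) \<le> Psi g ((\<Sum>x\<in>P. c * hh (card V) r (card (KK (\<pi>(q:=x)) (Suc q)))) / real (card P))"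
      unfolding G_def by (rule Psi_jensen[OF finP Pne g]) (simp add: c hh_nonneg)
    have s1: "(\<Sum>x\<in>P. c * hh (card V) r (card (KK (\<pi>(q:=x)) (Suc q)))) \<le> (\<Sum>x\<in>P. c * (if x \<in> KK \<pi> q then 0 else hh (card V) r k))"
      by (rule sum_mono) (rule mult_left_mono[OF each c])
    have s2: "(\<Sum>x\<in>P. c * (if x \<in> KK \<pi> q then 0 else hh (card V) r k)) = c * (real (card P - k) * hh (card V) r k)"
      unfolding sum_distrib_left[symmetric] k_def by (rule arg_cong[where f="\<lambda>t. c * t"], rule sum_if_notin[OF finP KP])
    have s3: "real (card P - k) / real (card P) \<le> 1 - real k / real (card V)"
    proof -
      have "real (card P - k) / real (card P) = 1 - real k / real (card P)" using kP cP by (simp add: field_simps of_nat_diff)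
      moreover have "real k / real (card V) \<le> real k / real (card P)"
        using Pn cP by (intro divide_left_mono) auto
      ultimately show ?thesis by linarith
    qed
    have s4: "(1 - real k / real (card V)) * hh (card V) r k \<le> hh (card V) (Suc r) k" by (rule hh_step[OF kn])
    have "(\<Sum>x\<in>P. c * hh (card V) r (card (KK (\<pi>(q:=x)) (Suc q)))) / real (card P)
        \<le> c * (real (card P - k) / real (card P) * hh (card V) r k)"
      using s1 s2 cP by (simp add: divide_right_mono)
    also have "\<dots> \<le> c * ((1 - real k / real (card V)) * hh (card V) r k)"
      by (intro mult_left_mono mult_right_mono s3 c hh_nonneg)
    also have "\<dots> \<le> c * hh (card V) (Suc r) k" by (intro mult_left_mono s4 c)
    finally have "(\<Sum>x\<in>P. c * hh (card V) r (card (KK (\<pi>(q:=x)) (Suc q)))) / real (card P) \<le> c * hh (card V) (Suc r) k" .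
    then have "Psi g ((\<Sum>x\<in>P. c * hh (card V) r (card (KK (\<pi>(q:=x)) (Suc q)))) / real (card P)) \<le> Psi g (c * hh (card V) (Suc r) k)"
      by (rule Psi_mono[OF g, rotated]) (use cP c in \<open>simp add: sum_nonneg hh_nonneg\<close>)
    with j show ?thesis unfolding P_def k_def by simp
  qed
  have "(\<Sum>\<pi>\<in>Om. Psi g (c * hh (card V) r (card (KK \<pi> (Suc q))))) = (\<Sum>\<pi>\<in>Om. G \<pi> (\<pi> q))"
    using 2 by simp
  also have "\<dots> \<le> (\<Sum>\<pi>\<in>Om. Psi g (c * hh (card V) (Suc r) (card (KK \<pi> q))))"
    unfolding 1 by (rule sum_mono) (rule 3)
  finally show ?thesis .
qed


lemma stepB:
  assumes q: "q \<in> {1..card V}" "q \<notin> S" and g: "g \<ge> 0" and n0: "card V > 0"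
  shows "(\<Sum>\<pi>\<in>Om. Psi g (YY r \<pi> (Suc q)))
       \<le> (\<Sum>\<pi>\<in>Om. Psi (g + exp 1 * real (Suc r) / (real (card V))^2) (YY (Suc r) \<pi> q))"
proof -
  define \<delta> where "\<delta> = exp 1 * real (Suc r) / (real (card V))^2"
  have \<delta>0: "\<delta> \<ge> 0" unfolding \<delta>_def by simp
  define J where "J = {1..<q}"
  have J: "J \<subseteq> {1..card V}" "q \<notin> J" using q unfolding J_def by auto
  define G where "G \<pi> x = Psi g (YY r (\<pi>(q:=x)) (Suc q))" for \<pi> x
  have Ginv: "G \<pi> z = G \<pi>' z" if "\<forall>i\<in>J. \<pi> i = \<pi>' i" for \<pi> \<pi>' z
  proof -
    have "\<forall>i\<in>{1..<Suc q}. (\<pi>(q:=z)) i = (\<pi>'(q:=z)) i" using that unfolding J_def by auto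
    then have "YY r (\<pi>(q:=z)) (Suc q) = YY r (\<pi>'(q:=z)) (Suc q)" by (rule YY_cong)
    then show ?thesis unfolding G_def by simp
  qed
  have 1: "(\<Sum>\<pi>\<in>Om. G \<pi> (\<pi> q)) = (\<Sum>\<pi>\<in>Om. (\<Sum>x\<in>pool \<pi> J. G \<pi> x) / real (card (pool \<pi> J)))"
    by (rule avg[OF q J(2) J(1)]) (rule Ginv)
  have 2: "G \<pi> (\<pi> q) = Psi g (YY r \<pi> (Suc q))" for \<pi> unfolding G_def by simp
  have 3: "(\<Sum>x\<in>pool \<pi> J. G \<pi> x) / real (card (pool \<pi> J)) \<le> Psi (g + \<delta>) (YY (Suc r) \<pi> q)"
    if \<pi>: "\<pi> \<in> Om" for \<pi>
  proof -
    define P where "P = pool \<pi> J"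
    define K where "K = KK \<pi> q"
    define k where "k = card K"
    define L where "L a = LL \<pi> q a" for a
    define f where "f a = hh (card V) r (card (L a))" for a
    define Y where "Y = YY (Suc r) \<pi> q"
    have qP: "\<pi> q \<in> P" unfolding P_def by (rule q_in_pool[OF \<pi> q J(2) J(1)])
    have finP: "finite P" unfolding P_def by (rule finite_pool)
    have Pne: "P \<noteq> {}" using qP by auto
    have KP: "K \<subseteq> P" unfolding P_def J_def K_def by (rule KK_pool)
    have LP: "L a \<subseteq> P" for a unfolding P_def J_def L_def by (rule LL_pool)
    have finK: "finite K" unfolding K_def by (rule finite_KK)
    have finL: "finite (L a)" for a unfolding L_def by (rule finite_LL)
    have KL: "K \<inter> L a = {}" for a unfolding K_def L_def by (rule KK_LL_disj)
    have kn: "k \<le> card V" unfolding k_def K_def by (rule card_KK_le)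
    have ln: "card (L a) \<le> card V" for a unfolding L_def by (rule card_LL_le)
    have Pn: "card P \<le> card V" unfolding P_def by (rule card_pool_le)
    have cP: "real (card P) > 0" using finP Pne by (simp add: card_gt_0_iff)
    have f0: "f a \<ge> 0" for a unfolding f_def by (rule hh_nonneg)
    have Y0: "Y \<ge> 0" unfolding Y_def by (rule YY_nonneg)
    have each: "YY r (\<pi>(q:=x)) (Suc q) \<le> (\<Sum>a\<in>K. if x \<in> K \<or> x \<in> L a then 0 else f a)" for x
    proof -
      define \<pi>x where "\<pi>x = \<pi>(q:=x)"
      have ag: "\<forall>i\<in>{1..<q}. \<pi>x i = \<pi> i" unfolding \<pi>x_def by simp
      have Kx: "KK \<pi>x q = K" unfolding K_def using KK_cong[OF ag] .
      have Lx: "LL \<pi>x q a = L a" for a unfolding L_def using LL_cong[OF ag] .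
      have xq: "\<pi>x q = x" unfolding \<pi>x_def by simp
      have q1: "1 \<le> q" using q by simp
      show ?thesis
      proof (cases "x \<in> K")
        case True
        then have "\<pi>x q \<in> KK \<pi>x q" using Kx xq by simp
        then have "KK \<pi>x (Suc q) = {}" by (rule KK_hit[OF q1])
        then show ?thesis using True unfolding \<pi>x_def[symmetric] YY_def by simp
      next
        case False
        have "YY r \<pi>x (Suc q) \<le> (\<Sum>a\<in>KK \<pi>x (Suc q). f a)"
          unfolding YY_def f_def
        proof (rule sum_mono)
          fix a
          have "LL \<pi>x (Suc q) a \<subseteq> L a" using LL_Suc[of \<pi>x q a] Lx[of a] by simp
          then have "card (LL \<pi>x (Suc q) a) \<le> card (L a)" by (rule card_mono[OF finL])
          then show "hh (card V) r (card (LL \<pi>x (Suc q) a)) \<le> hh (card V) r (card (L a))" by (rule hh_mono)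
        qed
        also have "\<dots> \<le> (\<Sum>a\<in>{a\<in>K. x \<notin> L a}. f a)"
        proof (rule sum_mono2)
          show "finite {a\<in>K. x \<notin> L a}" using finK by simp
          show "KK \<pi>x (Suc q) \<subseteq> {a\<in>K. x \<notin> L a}"
          proof
            fix a assume a: "a \<in> KK \<pi>x (Suc q)"
            then have "a \<in> K" using KK_Suc[of \<pi>x q] Kx by blast
            moreover have "x \<notin> L a"
            proof
              assume "x \<in> L a"
              then have "\<pi>x q \<in> LL \<pi>x q a" using Lx xq by simp
              then have "a \<notin> KK \<pi>x (Suc q)" by (rule LL_hit[OF q1])
              then show False using a by simp
            qed
            ultimately show "a \<in> {a\<in>K. x \<notin> L a}" by simp
          qed
        qed (use f0 in simp)
        also have "\<dots> = (\<Sum>a\<in>K. if x \<notin> L a then f a else 0)"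
          by (rule sum.inter_filter[OF finK])
        also have "\<dots> = (\<Sum>a\<in>K. if x \<in> K \<or> x \<in> L a then 0 else f a)"
          using False by (intro sum.cong) auto
        finally show ?thesis unfolding \<pi>x_def .
      qed
    qed
    have sumx: "(\<Sum>x\<in>P. YY r (\<pi>(q:=x)) (Suc q)) \<le> (\<Sum>a\<in>K. real (card P - (k + card (L a))) * f a)"
    proof -
      have "(\<Sum>x\<in>P. YY r (\<pi>(q:=x)) (Suc q)) \<le> (\<Sum>x\<in>P. \<Sum>a\<in>K. if x \<in> K \<or> x \<in> L a then 0 else f a)"
        by (rule sum_mono) (rule each)
      also have "\<dots> = (\<Sum>a\<in>K. \<Sum>x\<in>P. if x \<in> K \<union> L a then 0 else f a)"
        by (subst sum.swap) simp
      also have "\<dots> = (\<Sum>a\<in>K. real (card P - card (K \<union> L a)) * f a)"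
        using KP LP by (intro sum.cong refl sum_if_notin[OF finP]) auto
      also have "\<dots> = (\<Sum>a\<in>K. real (card P - (k + card (L a))) * f a)"
        unfolding k_def using card_Un_disjoint[OF finK finL KL] by simp
      finally show ?thesis .
    qed
    have trm: "real (card P - (k + card (L a))) / real (card P) * f a
        \<le> (1 - real k / real (card V)) * hh (card V) (Suc r) (card (L a))" if a: "a \<in> K" for a
    proof -
      have kl: "k + card (L a) \<le> card P"
        using card_mono[OF finP, of "K \<union> L a"] KP LP card_Un_disjoint[OF finK finL KL] unfolding k_def by simp
      have e1: "real (card P - (k + card (L a))) / real (card P) = 1 - (real k + real (card (L a))) / real (card P)"
        using kl cP by (simp add: field_simps of_nat_diff)
      have e2: "(real k + real (card (L a))) / real (card V) \<le> (real k + real (card (L a))) / real (card P)"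
        using Pn cP by (intro divide_left_mono) auto
      have e3: "1 - (real k + real (card (L a))) / real (card V) \<le> (1 - real k / real (card V)) * (1 - real (card (L a)) / real (card V))"
      proof -
        have "(1 - real k / real (card V)) * (1 - real (card (L a)) / real (card V))
             = 1 - (real k + real (card (L a))) / real (card V) + (real k / real (card V)) * (real (card (L a)) / real (card V))"
          using n0 by (simp add: field_simps)
        moreover have "(real k / real (card V)) * (real (card (L a)) / real (card V)) \<ge> 0" by simp
        ultimately show ?thesis by linarith
      qed
      have k1: "0 \<le> 1 - real k / real (card V)" using kn n0 by (simp add: divide_le_eq)
      have "real (card P - (k + card (L a))) / real (card P) * f a
          \<le> ((1 - real k / real (card V)) * (1 - real (card (L a)) / real (card V))) * f a"
        using e1 e2 e3 f0[of a] by (intro mult_right_mono) auto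
      also have "\<dots> = (1 - real k / real (card V)) * ((1 - real (card (L a)) / real (card V)) * f a)"
        by simp
      also have "\<dots> \<le> (1 - real k / real (card V)) * hh (card V) (Suc r) (card (L a))"
        unfolding f_def by (intro mult_left_mono hh_step ln k1)
      finally show ?thesis .
    qed
    have avgb: "(\<Sum>x\<in>P. YY r (\<pi>(q:=x)) (Suc q)) / real (card P) \<le> (1 - real k / real (card V)) * Y"
    proof -
      have "(\<Sum>x\<in>P. YY r (\<pi>(q:=x)) (Suc q)) / real (card P) \<le> (\<Sum>a\<in>K. real (card P - (k + card (L a))) * f a) / real (card P)"
        using sumx cP by (simp add: divide_right_mono)
      also have "\<dots> = (\<Sum>a\<in>K. real (card P - (k + card (L a))) / real (card P) * f a)"
        by (simp add: sum_divide_distrib)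
      also have "\<dots> \<le> (\<Sum>a\<in>K. (1 - real k / real (card V)) * hh (card V) (Suc r) (card (L a)))"
        by (rule sum_mono) (rule trm)
      also have "\<dots> = (1 - real k / real (card V)) * Y"
        unfolding Y_def YY_def K_def L_def by (simp add: sum_distrib_left)
      finally show ?thesis .
    qed
    have Yk: "Y \<le> real k * (real (card V) / (exp 1 * real (Suc r)))"
      unfolding Y_def k_def K_def by (rule YY_bound[OF n0]) simp
    have shr: "(1 - real k / real (card V)) * Y \<le> Y - \<delta> * Y^2"
    proof -
      have "\<delta> * Y^2 = (exp 1 * real (Suc r) / (real (card V))^2) * Y * Y" unfolding \<delta>_def power2_eq_square by simp
      also have "\<dots> \<le> (exp 1 * real (Suc r) / (real (card V))^2) * Y * (real k * (real (card V) / (exp 1 * real (Suc r))))"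
        using Yk Y0 by (intro mult_left_mono) auto
      also have "\<dots> = real k / real (card V) * Y"
      proof -
        define A where "A = exp 1 * real (Suc r)"
        define N where "N = real (card V)"
        have A0: "A > 0" unfolding A_def by simp
        have N0: "N > 0" unfolding N_def using n0 by simp
        have "A / N^2 * Y * (real k * (N / A)) = real k / N * Y"
          using A0 N0 by (simp add: field_simps power2_eq_square)
        then show ?thesis unfolding A_def N_def .
      qed
      finally show ?thesis by (simp add: algebra_simps)
    qed
    define avgY where "avgY = (\<Sum>x\<in>P. YY r (\<pi>(q:=x)) (Suc q)) / real (card P)"
    have avg0: "avgY \<ge> 0" unfolding avgY_def using cP by (simp add: sum_nonneg YY_nonneg)
    have "(\<Sum>x\<in>P. G \<pi> x) / real (card P) \<le> Psi g avgY"
      unfolding G_def avgY_def by (rule Psi_jensen[OF finP Pne g]) (simp add: YY_nonneg)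
    also have "\<dots> \<le> Psi g (Y - \<delta> * Y^2)"
      by (rule Psi_mono[OF g avg0]) (use avgb shr avgY_def in linarith)
    also have "\<dots> \<le> Psi (g + \<delta>) Y"
      by (rule Psi_shift[OF g \<delta>0 Y0]) (use avgb shr avg0 avgY_def in linarith)
    finally show ?thesis unfolding P_def Y_def .
  qed
  have "(\<Sum>\<pi>\<in>Om. Psi g (YY r \<pi> (Suc q))) = (\<Sum>\<pi>\<in>Om. G \<pi> (\<pi> q))"
    using 2 by simp
  also have "\<dots> \<le> (\<Sum>\<pi>\<in>Om. Psi (g + \<delta>) (YY (Suc r) \<pi> q))"
    unfolding 1 by (rule sum_mono) (rule 3)
  finally show ?thesis unfolding \<delta>_def .
qed


lemma tele:
  fixes f :: "nat \<Rightarrow> real"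
  assumes "\<And>q. m \<le> q \<Longrightarrow> q < m + d \<Longrightarrow> f (Suc q) \<le> f q"
  shows "f (m + d) \<le> f m"
  using assms
proof (induction d)
  case 0 then show ?case by simp
next
  case (Suc d)
  have "f (m + d) \<le> f m" using Suc.IH Suc.prems by simp
  moreover have "f (Suc (m + d)) \<le> f (m + d)" using Suc.prems[of "m + d"] by simp
  ultimately show ?case by simp
qed

definition rcnt :: "nat \<Rightarrow> nat \<Rightarrow> nat" where
  "rcnt q b = card {i \<in> {q..b}. i \<notin> S}"

lemma rcnt_free: "q \<notin> S \<Longrightarrow> q \<le> b \<Longrightarrow> rcnt q b = Suc (rcnt (Suc q) b)"
proof -
  assume a: "q \<notin> S" "q \<le> b"
  have "{i \<in> {q..b}. i \<notin> S} = insert q {i \<in> {Suc q..b}. i \<notin> S}" using a by auto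
  moreover have "q \<notin> {i \<in> {Suc q..b}. i \<notin> S}" by simp
  ultimately show ?thesis unfolding rcnt_def by simp
qed

lemma rcnt_S: "q \<in> S \<Longrightarrow> rcnt q b = rcnt (Suc q) b"
proof -
  assume a: "q \<in> S"
  have "{i \<in> {q..b}. i \<notin> S} = {i \<in> {Suc q..b}. i \<notin> S}" using a by (auto simp: le_less Suc_le_eq)
  then show ?thesis unfolding rcnt_def by simp
qed

lemma rcnt_end: "rcnt (Suc b) b = 0"
  unfolding rcnt_def by simp

definition gam :: "nat \<Rightarrow> real" where
  "gam r = exp 1 * real r * real (Suc r) / (2 * (real (card V))^2)"

lemma gam_Suc: "gam (Suc r) = gam r + exp 1 * real (Suc r) / (real (card V))^2"
proof (cases "card V = 0")
  case True then show ?thesis unfolding gam_def by simp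
next
  case False
  then show ?thesis unfolding gam_def by (simp add: field_simps)
qed

lemma gam_nonneg: "gam r \<ge> 0" unfolding gam_def by simp
lemma gam0: "gam 0 = 0" unfolding gam_def by simp

lemma phaseA:
  assumes "qA \<le> card V" "g \<ge> 0" "c \<ge> 0"
  shows "(\<Sum>\<pi>\<in>Om. Psi g (c * hh (card V) 0 (card (KK \<pi> (Suc qA)))))
     \<le> (\<Sum>\<pi>\<in>Om. Psi g (c * hh (card V) (rcnt 1 qA) (card (KK \<pi> 1))))"
proof -
  define f where "f q = (\<Sum>\<pi>\<in>Om. Psi g (c * hh (card V) (rcnt q qA) (card (KK \<pi> q))))" for q
  have "f (1 + qA) \<le> f 1"
  proof (rule tele)
    fix q assume q: "1 \<le> q" "q < 1 + qA"
    show "f (Suc q) \<le> f q"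
    proof (cases "q \<in> S")
      case True
      then have r: "rcnt (Suc q) qA = rcnt q qA" using rcnt_S by simp
      show ?thesis unfolding f_def r
      proof (rule sum_mono)
        fix \<pi>
        have "card (KK \<pi> (Suc q)) \<le> card (KK \<pi> q)" by (rule card_mono[OF finite_KK KK_Suc])
        then have h: "hh (card V) (rcnt q qA) (card (KK \<pi> (Suc q))) \<le> hh (card V) (rcnt q qA) (card (KK \<pi> q))"
          by (rule hh_mono)
        show "Psi g (c * hh (card V) (rcnt q qA) (card (KK \<pi> (Suc q))))
            \<le> Psi g (c * hh (card V) (rcnt q qA) (card (KK \<pi> q)))"
          by (rule Psi_mono[OF assms(2)]) (use h assms(3) hh_nonneg in \<open>auto intro: mult_left_mono\<close>)
      qed
    next
      case False
      have r: "rcnt q qA = Suc (rcnt (Suc q) qA)" using rcnt_free[OF False] q by simp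
      have qV: "q \<in> {1..card V}" using q assms(1) by simp
      show ?thesis unfolding f_def r by (rule stepA[OF qV False assms(2,3)])
    qed
  qed
  then show ?thesis unfolding f_def using rcnt_end[of qA] by simp
qed

lemma phaseB:
  assumes "1 \<le> m" "m \<le> Suc t2" "t2 \<le> card V" "card V > 0"
  shows "(\<Sum>\<pi>\<in>Om. YY 0 \<pi> (Suc t2)) \<le> (\<Sum>\<pi>\<in>Om. Psi (gam (rcnt m t2)) (YY (rcnt m t2) \<pi> m))"
proof -
  define f where "f q = (\<Sum>\<pi>\<in>Om. Psi (gam (rcnt q t2)) (YY (rcnt q t2) \<pi> q))" for q
  obtain d where d: "Suc t2 = m + d" using assms(2) le_Suc_ex by blast
  have "f (m + d) \<le> f m"
  proof (rule tele)
    fix q assume q: "m \<le> q" "q < m + d"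
    show "f (Suc q) \<le> f q"
    proof (cases "q \<in> S")
      case True
      then have r: "rcnt (Suc q) t2 = rcnt q t2" using rcnt_S by simp
      show ?thesis unfolding f_def r
        by (rule sum_mono, rule Psi_mono[OF gam_nonneg YY_nonneg YY_Suc])
    next
      case False
      have qt: "q \<le> t2" using q d by simp
      have r: "rcnt q t2 = Suc (rcnt (Suc q) t2)" by (rule rcnt_free[OF False qt])
      have qV: "q \<in> {1..card V}" using q assms qt by simp
      show ?thesis unfolding f_def r gam_Suc by (rule stepB[OF qV False gam_nonneg assms(4)])
    qed
  qed
  then have "f (Suc t2) \<le> f m" using d by simp
  then show ?thesis unfolding f_def using rcnt_end[of t2] by (simp add: gam0 Psi_zero)
qed

lemma Z_bound:
  assumes "1 \<le> qA" "qA < t2" "t2 \<le> card V" "card V > 0"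
    and sA: "rcnt 1 qA \<ge> 1" and sB: "rcnt (Suc qA) t2 \<ge> 1"
  shows "(\<Sum>\<pi>\<in>Om. YY 0 \<pi> (Suc t2)) \<le> real (card Om) *
     Psi (gam (rcnt (Suc qA) t2)) (real (card V) / (exp 1 * real (rcnt (Suc qA) t2)) * (real (card V) / (exp 1 * real (rcnt 1 qA))))"
proof -
  define g where "g = gam (rcnt (Suc qA) t2)"
  define c where "c = real (card V) / (exp 1 * real (rcnt (Suc qA) t2))"
  have g0: "g \<ge> 0" unfolding g_def by (rule gam_nonneg)
  have c0: "c \<ge> 0" unfolding c_def by simp
  have "(\<Sum>\<pi>\<in>Om. YY 0 \<pi> (Suc t2)) \<le> (\<Sum>\<pi>\<in>Om. Psi g (YY (rcnt (Suc qA) t2) \<pi> (Suc qA)))"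
    unfolding g_def by (rule phaseB) (use assms in auto)
  also have "\<dots> \<le> (\<Sum>\<pi>\<in>Om. Psi g (c * hh (card V) 0 (card (KK \<pi> (Suc qA)))))"
  proof (rule sum_mono)
    fix \<pi>
    have "YY (rcnt (Suc qA) t2) \<pi> (Suc qA) \<le> real (card (KK \<pi> (Suc qA))) * c"
      unfolding c_def by (rule YY_bound[OF assms(4) sB])
    then show "Psi g (YY (rcnt (Suc qA) t2) \<pi> (Suc qA)) \<le> Psi g (c * hh (card V) 0 (card (KK \<pi> (Suc qA))))"
      by (intro Psi_mono[OF g0 YY_nonneg]) (simp add: hh_r0 mult.commute)
  qed
  also have "\<dots> \<le> (\<Sum>\<pi>\<in>Om. Psi g (c * hh (card V) (rcnt 1 qA) (card (KK \<pi> 1))))"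
    by (rule phaseA) (use assms g0 c0 in auto)
  also have "\<dots> \<le> (\<Sum>\<pi>\<in>Om. Psi g (c * (real (card V) / (exp 1 * real (rcnt 1 qA)))))"
  proof (rule sum_mono)
    fix \<pi>
    have "hh (card V) (rcnt 1 qA) (card (KK \<pi> 1)) \<le> real (card V) / (exp 1 * real (rcnt 1 qA))"
      by (rule hh_bound[OF assms(4) sA card_KK_le])
    then show "Psi g (c * hh (card V) (rcnt 1 qA) (card (KK \<pi> 1))) \<le> Psi g (c * (real (card V) / (exp 1 * real (rcnt 1 qA))))"
      by (intro Psi_mono[OF g0] mult_left_mono c0 mult_nonneg_nonneg hh_nonneg)
  qed
  also have "\<dots> = real (card Om) * Psi g (c * (real (card V) / (exp 1 * real (rcnt 1 qA))))"
    by simp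
  finally show ?thesis unfolding g_def c_def .
qed

lemma card_pool_ge:
  assumes "\<pi> \<in> Om" "finite J"
  shows "card V - card (J \<union> S) \<le> card (pool \<pi> J)"
proof -
  have finS: "finite S" using S_sub finite_subset by blast
  have eq: "pool \<pi> J = V - \<pi> ` (J \<union> S)" unfolding pool_def using Om_sigmaS[OF assms(1)] by auto
  have c2: "card V - card (\<pi> ` (J \<union> S)) \<le> card (V - \<pi> ` (J \<union> S))"
    by (rule diff_card_le_card_Diff) (use assms(2) finS in simp)
  have c3: "card (\<pi> ` (J \<union> S)) \<le> card (J \<union> S)" by (rule card_image_le) (use assms(2) finS in simp)
  have "card V - card (J \<union> S) \<le> card V - card (\<pi> ` (J \<union> S))" using c3 by (rule diff_le_mono2)
  then show ?thesis using c2 eq by simp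
qed


lemma in_pool_pos:
  assumes "\<pi> \<in> Om" "p \<in> {1..card V}" "p \<notin> S" "t < p"
  shows "\<pi> p \<in> pool \<pi> {1..<Suc t}"
  by (rule q_in_pool[OF assms(1,2,3)]) (use assms in auto)

lemma event_imp:
  assumes \<pi>: "\<pi> \<in> Om" and \<pi>': "\<pi>' \<in> orderings V"
    and agree: "\<forall>i\<in>S \<union> {1..t2} \<union> {p2, p3}. \<pi>' i = \<pi> i"
    and dp: "dep_path E (card V) \<pi>' p1 p2 p3"
    and t: "t2 < p1" "p3 \<le> card V" "p1 \<in> S" "p2 \<notin> S" "p3 \<notin> S"
  shows "\<pi> p2 \<in> KK \<pi> (Suc t2) \<and> \<pi> p3 \<in> LL \<pi> (Suc t2) (\<pi> p2)"
proof -
  define n where "n = card V"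
  define MIS where "MIS = greedy_mis E n \<pi>'"
  from dp have o: "p1 < p2" "p2 < p3" "E (\<pi>' p1) (\<pi>' p2)" "E (\<pi>' p2) (\<pi>' p3)" "\<pi>' p1 \<in> MIS"
    "\<pi>' p3 \<in> MIS" "\<pi>' p1 = inhib E n \<pi>' (\<pi>' p2)"
    unfolding dep_path_def MIS_def n_def by auto
  have ind: "\<forall>u\<in>MIS. \<forall>w\<in>MIS. \<not> E u w" unfolding MIS_def greedy_mis_def
    by (rule greedy_aux_indep[OF symE irrE]) simp
  have bij': "bij_betw \<pi>' {1..n} V" using \<pi>' unfolding orderings_def n_def by auto
  have inj': "inj_on \<pi>' {1..n}" using bij' bij_betw_def by blast
  have inj: "inj_on \<pi> {1..n}" using OmD(2)[OF \<pi>] n_def by simp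
  have Meq: "Mq E \<pi> (Suc t2) = Mq E \<pi>' (Suc t2)" by (rule Mq_cong) (use agree in auto)
  have tn: "t2 < n" using t o n_def by simp
  have MsubMIS: "Mq E \<pi>' (Suc t2) \<subseteq> MIS" unfolding MIS_def greedy_mis_Mq by (rule Mq_mono) (use tn in simp)
  have v1eq: "v1 = \<pi>' p1" unfolding v1_def using agree OmD(4)[OF \<pi> t(3)] t(3) by simp
  have aeq: "\<pi> p2 = \<pi>' p2" "\<pi> p3 = \<pi>' p3" using agree by auto
  have Ma: "w \<in> MIS" if "w \<in> Mq E \<pi> (Suc t2)" for w using that Meq MsubMIS by blast
  have ub1: "unbl \<pi> (Suc t2) v1"
    unfolding unbl_def v1eq using Ma ind o(5) by blast
  have ubc: "unbl \<pi> (Suc t2) (\<pi> p3)"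
    unfolding unbl_def using Ma ind o(6) aeq by metis
  have nvc: "\<not> E v1 (\<pi> p3)" using ind o(5,6) v1eq aeq by metis
  have e1: "E v1 (\<pi> p2)" using o(3) v1eq aeq by simp
  have e2: "E (\<pi> p2) (\<pi> p3)" using o(4) aeq by simp
  have p1n: "p1 \<in> {1..n}" using t o by (simp add: n_def)
  have uba: "unbl \<pi> (Suc t2) (\<pi> p2)"
    unfolding unbl_def
  proof
    fix w assume w: "w \<in> Mq E \<pi> (Suc t2)"
    show "\<not> E w (\<pi> p2)"
    proof
      assume ew: "E w (\<pi> p2)"
      have "w \<in> \<pi>' ` {1..<Suc t2}" using w Meq Mq_sub by blast
      then obtain j where j: "j \<in> {1..<Suc t2}" "w = \<pi>' j" by blast
      define P where "P q = (q \<in> {1..n} \<and> \<pi>' q \<in> MIS \<and> E (\<pi>' q) (\<pi>' p2))" for q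
      have Pj: "P j" unfolding P_def using j tn Ma[OF w] ew aeq by auto
      define L0 where "L0 = (LEAST q. P q)"
      have PL: "P L0" unfolding L0_def using Pj by (rule LeastI)
      have Lj: "L0 \<le> j" unfolding L0_def using Pj by (rule Least_le)
      have "inhib E n \<pi>' (\<pi>' p2) = \<pi>' L0"
        unfolding inhib_def L0_def P_def MIS_def by simp
      then have "\<pi>' p1 = \<pi>' L0" using o(7) by simp
      moreover have "L0 \<in> {1..n}" using PL unfolding P_def by simp
      ultimately have "p1 = L0" using inj' p1n by (auto dest: inj_onD)
      then show False using Lj j t(1) by simp
    qed
  qed
  have p2n: "p2 \<in> {1..card V}" using t o by simp
  have p3n: "p3 \<in> {1..card V}" using t o by simp
  have ap: "\<pi> p2 \<in> pool \<pi> {1..<Suc t2}" by (rule in_pool_pos[OF \<pi> p2n t(4)]) (use t o in simp)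
  have cp: "\<pi> p3 \<in> pool \<pi> {1..<Suc t2}" by (rule in_pool_pos[OF \<pi> p3n t(5)]) (use t o in simp)
  have "\<pi> p2 \<in> KK \<pi> (Suc t2)" unfolding KK_def using ub1 ap e1 uba by simp
  moreover have "\<pi> p3 \<in> LL \<pi> (Suc t2) (\<pi> p2)" unfolding LL_def using cp e2 nvc ubc by simp
  ultimately show ?thesis by simp
qed

lemma final_count:
  assumes t: "t2 < p2" "p2 < p3" "p3 \<le> card V" "p2 \<notin> S" "p3 \<notin> S"
    and m: "0 < mlo" "mlo \<le> card V - card (({1..<Suc t2} \<union> {p2}) \<union> S)" "mlo \<le> card V - card ({1..<Suc t2} \<union> S)"
  shows "real (card {\<pi>\<in>Om. \<pi> p2 \<in> KK \<pi> (Suc t2) \<and> \<pi> p3 \<in> LL \<pi> (Suc t2) (\<pi> p2)})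
      \<le> (\<Sum>\<pi>\<in>Om. YY 0 \<pi> (Suc t2)) / (real mlo * real mlo)"
proof -
  define J3 where "J3 = {1..<Suc t2} \<union> {p2}"
  define J2 where "J2 = {1..<Suc t2}"
  define H where "H \<pi> = (if \<pi> p2 \<in> KK \<pi> (Suc t2) then real (card (LL \<pi> (Suc t2) (\<pi> p2))) else 0)" for \<pi>
  define G3 where "G3 \<pi> z = (if \<pi> p2 \<in> KK \<pi> (Suc t2) \<and> z \<in> LL \<pi> (Suc t2) (\<pi> p2) then 1 else (0::real))" for \<pi> z
  define G2 where "G2 \<pi> z = (if z \<in> KK \<pi> (Suc t2) then real (card (LL \<pi> (Suc t2) z)) else 0) / real mlo" for \<pi> z
  have mpos: "real mlo > 0" using m by simp
  have c0: "real (card {\<pi>\<in>Om. \<pi> p2 \<in> KK \<pi> (Suc t2) \<and> \<pi> p3 \<in> LL \<pi> (Suc t2) (\<pi> p2)}) = (\<Sum>\<pi>\<in>Om. G3 \<pi> (\<pi> p3))"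
  proof -
    have "(\<Sum>\<pi>\<in>Om. G3 \<pi> (\<pi> p3)) = sum (\<lambda>_. 1::real) {\<pi>\<in>Om. \<pi> p2 \<in> KK \<pi> (Suc t2) \<and> \<pi> p3 \<in> LL \<pi> (Suc t2) (\<pi> p2)}"
      unfolding G3_def using sum.inter_filter[OF finite_Om, of "\<lambda>_. 1::real"] by simp
    then show ?thesis by simp
  qed
  have p3n: "p3 \<in> {1..card V}" using t by simp
  have p2n: "p2 \<in> {1..card V}" using t by simp
  have J3s: "J3 \<subseteq> {1..card V}" "p3 \<notin> J3" using t unfolding J3_def by auto
  have J2s: "J2 \<subseteq> {1..card V}" "p2 \<notin> J2" using t unfolding J2_def by auto
  have a3: "(\<Sum>\<pi>\<in>Om. G3 \<pi> (\<pi> p3)) = (\<Sum>\<pi>\<in>Om. (\<Sum>z\<in>pool \<pi> J3. G3 \<pi> z) / real (card (pool \<pi> J3)))"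
  proof (rule avg[OF p3n t(5) J3s(2) J3s(1)])
    fix \<pi> \<pi>' :: "nat \<Rightarrow> nat" and z :: nat assume h: "\<forall>i\<in>J3. \<pi> i = \<pi>' i"
    then have h1: "\<forall>i\<in>{1..<Suc t2}. \<pi> i = \<pi>' i" and h2: "\<pi> p2 = \<pi>' p2" unfolding J3_def by auto
    show "G3 \<pi> z = G3 \<pi>' z" unfolding G3_def using KK_cong[OF h1] LL_cong[OF h1] h2 by simp
  qed
  have b3: "(\<Sum>z\<in>pool \<pi> J3. G3 \<pi> z) / real (card (pool \<pi> J3)) \<le> H \<pi> / real mlo" if \<pi>: "\<pi> \<in> Om" for \<pi>
  proof -
    have num: "(\<Sum>z\<in>pool \<pi> J3. G3 \<pi> z) \<le> H \<pi>"
    proof (cases "\<pi> p2 \<in> KK \<pi> (Suc t2)")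
      case True
      have "(\<Sum>z\<in>pool \<pi> J3. G3 \<pi> z) = (\<Sum>z\<in>pool \<pi> J3. if z \<in> LL \<pi> (Suc t2) (\<pi> p2) then 1 else 0)"
        unfolding G3_def using True by simp
      also have "\<dots> = real (card (pool \<pi> J3 \<inter> LL \<pi> (Suc t2) (\<pi> p2)))"
        using sum.inter_restrict[OF finite_pool, of "\<lambda>_. 1::real" \<pi> J3 "LL \<pi> (Suc t2) (\<pi> p2)"] by simp
      also have "\<dots> \<le> real (card (LL \<pi> (Suc t2) (\<pi> p2)))"
        by (simp add: card_mono[OF finite_LL])
      finally show ?thesis unfolding H_def using True by simp
    next
      case False then show ?thesis unfolding G3_def H_def by simp
    qed
    have H0: "H \<pi> \<ge> 0" unfolding H_def by simp
    have "card V - card (J3 \<union> S) \<le> card (pool \<pi> J3)" by (rule card_pool_ge[OF \<pi>]) (simp add: J3_def)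
    then have cp: "real mlo \<le> real (card (pool \<pi> J3))" using m unfolding J3_def by simp
    have "(\<Sum>z\<in>pool \<pi> J3. G3 \<pi> z) / real (card (pool \<pi> J3)) \<le> H \<pi> / real (card (pool \<pi> J3))"
      using num cp mpos by (intro divide_right_mono) auto
    also have "\<dots> \<le> H \<pi> / real mlo" using H0 cp mpos by (intro divide_left_mono) auto
    finally show ?thesis .
  qed
  have a2: "(\<Sum>\<pi>\<in>Om. G2 \<pi> (\<pi> p2)) = (\<Sum>\<pi>\<in>Om. (\<Sum>z\<in>pool \<pi> J2. G2 \<pi> z) / real (card (pool \<pi> J2)))"
  proof (rule avg[OF p2n t(4) J2s(2) J2s(1)])
    fix \<pi> \<pi>' :: "nat \<Rightarrow> nat" and z :: nat assume h: "\<forall>i\<in>J2. \<pi> i = \<pi>' i"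
    then have h1: "\<forall>i\<in>{1..<Suc t2}. \<pi> i = \<pi>' i" unfolding J2_def by auto
    show "G2 \<pi> z = G2 \<pi>' z" unfolding G2_def using KK_cong[OF h1] LL_cong[OF h1] by simp
  qed
  have G2H: "G2 \<pi> (\<pi> p2) = H \<pi> / real mlo" for \<pi> by (simp add: G2_def H_def)
  have b2: "(\<Sum>z\<in>pool \<pi> J2. G2 \<pi> z) / real (card (pool \<pi> J2)) \<le> YY 0 \<pi> (Suc t2) / (real mlo * real mlo)"
    if \<pi>: "\<pi> \<in> Om" for \<pi>
  proof -
    have "(\<Sum>z\<in>pool \<pi> J2. G2 \<pi> z) = (\<Sum>z\<in>pool \<pi> J2. if z \<in> KK \<pi> (Suc t2) then real (card (LL \<pi> (Suc t2) z)) else 0) / real mlo"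
      unfolding G2_def by (simp add: sum_divide_distrib)
    also have "(\<Sum>z\<in>pool \<pi> J2. if z \<in> KK \<pi> (Suc t2) then real (card (LL \<pi> (Suc t2) z)) else 0) = (\<Sum>z\<in>KK \<pi> (Suc t2). real (card (LL \<pi> (Suc t2) z)))"
      by (rule sum_if_sub[OF finite_pool]) (unfold J2_def, rule KK_pool)
    also have "\<dots> = YY 0 \<pi> (Suc t2)" unfolding YY_def by (simp add: hh_r0)
    finally have num: "(\<Sum>z\<in>pool \<pi> J2. G2 \<pi> z) = YY 0 \<pi> (Suc t2) / real mlo" .
    have "card V - card (J2 \<union> S) \<le> card (pool \<pi> J2)" by (rule card_pool_ge[OF \<pi>]) (simp add: J2_def)
    then have cp: "real mlo \<le> real (card (pool \<pi> J2))" using m unfolding J2_def by simp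
    have Y0: "YY 0 \<pi> (Suc t2) / real mlo \<ge> 0" using YY_nonneg mpos by simp
    have "YY 0 \<pi> (Suc t2) / real mlo / real (card (pool \<pi> J2)) \<le> YY 0 \<pi> (Suc t2) / real mlo / real mlo"
      using Y0 cp mpos by (intro divide_left_mono) auto
    then show ?thesis unfolding num by simp
  qed
  have "real (card {\<pi>\<in>Om. \<pi> p2 \<in> KK \<pi> (Suc t2) \<and> \<pi> p3 \<in> LL \<pi> (Suc t2) (\<pi> p2)})
       \<le> (\<Sum>\<pi>\<in>Om. H \<pi> / real mlo)"
    unfolding c0 a3 by (rule sum_mono) (rule b3)
  also have "\<dots> = (\<Sum>\<pi>\<in>Om. G2 \<pi> (\<pi> p2))" by (simp add: G2H)
  also have "\<dots> \<le> (\<Sum>\<pi>\<in>Om. YY 0 \<pi> (Suc t2) / (real mlo * real mlo))"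
    unfolding a2 by (rule sum_mono) (rule b2)
  also have "\<dots> = (\<Sum>\<pi>\<in>Om. YY 0 \<pi> (Suc t2)) / (real mlo * real mlo)"
    by (simp add: sum_divide_distrib)
  finally show ?thesis .
qed

end



lemma arith_final:
  fixes e N a b L m :: real
  assumes e: "0 < e" "e \<le> 3" and L: "0 < L" "L \<le> a" "L \<le> b" and N: "0 < N" "199/200 * N \<le> m"
  shows "(N^2 / (e^2 * a * b + e * b * (b + 1) / 2)) / m^2 \<le> (1 - 1/200) / (e * L)^2"
proof -
  define D where "D = e^2 * a * b + e * b * (b + 1) / 2"
  define c where "c = (199/200::real)"
  have ab: "L * L \<le> a * b" using L by (intro mult_mono) auto
  have bb: "L * L \<le> b * (b + 1)" using L by (intro mult_mono) auto
  have D1': "e^2 * (L * L) \<le> e^2 * (a * b)" by (rule mult_left_mono[OF ab]) simp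
  then have D1: "e^2 * (L * L) \<le> e^2 * a * b" by (simp add: mult.assoc)
  have D2: "e * (L * L) / 2 \<le> e * b * (b + 1) / 2" using bb e by (simp add: mult.assoc)
  have eqL: "L^2 * (e^2 + e / 2) = e^2 * (L * L) + e * (L * L) / 2" by (simp add: power2_eq_square algebra_simps)
  have DL: "L^2 * (e^2 + e / 2) \<le> D" unfolding D_def eqL using D1 D2 by linarith
  have Lpos: "0 < L^2 * (e^2 + e / 2)" using e L by (intro mult_pos_pos add_pos_pos) auto
  have mpos: "0 < m" using N by linarith
  have m2: "(c * N)^2 \<le> m^2" unfolding c_def using N by (intro power_mono) auto
  have cNpos: "0 < (c * N)^2" using N unfolding c_def by simp
  have "N^2 / D / m^2 = N^2 / (D * m^2)" by simp
  also have "\<dots> \<le> N^2 / ((L^2 * (e^2 + e / 2)) * (c * N)^2)"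
  proof (rule divide_left_mono)
    have Dpos: "0 < D" using DL Lpos by linarith
    have mm: "0 < m^2" using mpos by simp
    show "L\<^sup>2 * (e\<^sup>2 + e / 2) * (c * N)\<^sup>2 \<le> D * m\<^sup>2"
      by (rule mult_mono) (use DL m2 Dpos cNpos in auto)
    show "0 \<le> N^2" by simp
    show "0 < D * m\<^sup>2 * (L\<^sup>2 * (e\<^sup>2 + e / 2) * (c * N)\<^sup>2)"
      using Dpos mm Lpos cNpos by simp
  qed
  also have "\<dots> = 1 / ((L^2 * (e^2 + e / 2)) * c^2)"
  proof -
    define K where "K = L^2 * (e^2 + e / 2)"
    have "N^2 / (K * (c * N)^2) = 1 / (K * c^2)" using N by (simp add: power_mult_distrib)
    then show ?thesis unfolding K_def .
  qed
  also have "\<dots> \<le> c / (e * L)^2"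
  proof -
    have c3: "e^2 \<le> c^3 * (e^2 + e / 2)"
    proof -
      have c3v: "c^3 = 7880599/8000000" unfolding c_def by (simp add: power3_eq_cube)
      have "(1 - c^3) * e \<le> c^3 / 2" unfolding c3v using e by simp
      then have "(1 - c^3) * e * e \<le> c^3 / 2 * e" using e by (intro mult_right_mono) auto
      then show ?thesis by (simp add: power2_eq_square algebra_simps)
    qed
    have pos1: "0 < (L^2 * (e^2 + e / 2)) * c^2" using Lpos unfolding c_def by simp
    have pos2: "0 < (e * L)^2" using e L by simp
    have "(e * L)^2 \<le> c * ((L^2 * (e^2 + e / 2)) * c^2)"
    proof -
      have "(e * L)^2 = L^2 * e^2" by (simp add: power_mult_distrib)
      also have "\<dots> \<le> L^2 * (c^3 * (e^2 + e / 2))" using c3 by (intro mult_left_mono) auto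
      also have "\<dots> = c * ((L^2 * (e^2 + e / 2)) * c^2)" by (simp add: power3_eq_cube power2_eq_square)
      finally show ?thesis .
    qed
    then show ?thesis
    proof -
      assume h: "(e * L)^2 \<le> c * ((L^2 * (e^2 + e / 2)) * c^2)"
      define X where "X = (L^2 * (e^2 + e / 2)) * c^2"
      define Y where "Y = (e * L)^2"
      have XY: "0 < X" "0 < Y" using pos1 pos2 unfolding X_def Y_def by auto
      have "c / Y - 1 / X = (c * X - Y) / (X * Y)" using XY by (simp add: field_simps)
      moreover have "(c * X - Y) / (X * Y) \<ge> 0" using h XY unfolding X_def Y_def by simp
      ultimately have "1 / X \<le> c / Y" by linarith
      then show ?thesis unfolding X_def Y_def .
    qed
  qed
  finally show ?thesis unfolding D_def c_def by simp
qed


lemma psi_eval: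
  fixes e a b N :: real
  assumes "0 < e" "0 < a" "0 < b" "0 < N"
  shows "Psi (e * b * (1 + b) / (2 * N^2)) (N / (e * b) * (N / (e * a))) = N^2 / (e^2 * a * b + e * b * (b + 1) / 2)"
proof -
  define X where "X = N / (e * b) * (N / (e * a))"
  define g where "g = e * b * (1 + b) / (2 * N^2)"
  define K where "K = 2 * e * a + 1 + b"
  have "0 < 2 * e * a" using assms by simp
  then have K0: "0 < K" unfolding K_def using assms by linarith
  have gX: "g * X = (1 + b) / (2 * e * a)"
    unfolding g_def X_def using assms by (simp add: field_simps power2_eq_square)
  have l1: "1 + g * X = K / (2 * e * a)" unfolding gX K_def using assms by (simp add: field_simps)
  have l2: "X / (K / (2 * e * a)) = 2 * N^2 / (e * b * K)"
    unfolding X_def using assms K0 by (simp add: field_simps power2_eq_square)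
  have l3: "N^2 / (e^2 * a * b + e * b * (b + 1) / 2) = 2 * N^2 / (e * b * K)"
  proof -
    have h: "e^2 * a * b + e * b * (b + 1) / 2 = e * b * K / 2" unfolding K_def by (simp add: algebra_simps power2_eq_square)
    show ?thesis unfolding h by (simp add: mult.commute)
  qed
  show ?thesis unfolding Psi_def g_def[symmetric] X_def[symmetric] l1 l2 l3 ..
qed

lemma main:
  fixes V :: "nat set" and E :: "nat \<Rightarrow> nat \<Rightarrow> bool" and p1 p2 p3 :: nat and P1 P2 :: "nat set"
    and l :: nat and S :: "nat set" and \<sigma> :: "nat \<Rightarrow> nat"
  assumes finV: "finite V" and sym: "\<forall>u v. E u v \<longrightarrow> E v u" and irr: "\<forall>v. \<not> E v v"
    and o12: "p1 < p2" and o23: "p2 < p3"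
    and p1B: "p1 \<in> {1..nat \<lfloor>1/200 * real (card V)\<rfloor>}"
    and p2B: "p2 \<in> {1..nat \<lfloor>1/200 * real (card V)\<rfloor>}"
    and p3B: "p3 \<in> {1..nat \<lfloor>1/200 * real (card V)\<rfloor>}"
    and P1B: "P1 \<subseteq> {1..nat \<lfloor>1/200 * real (card V)\<rfloor>}"
    and P2B: "P2 \<subseteq> {1..nat \<lfloor>1/200 * real (card V)\<rfloor>}"
    and disj: "P1 \<inter> P2 = {}" and cP1: "card P1 = l" and cP2: "card P2 = l" and l: "l \<ge> 10000"
    and mm: "Max P1 < Min P2" and m2: "Max P2 < p1"
    and SB: "S \<subseteq> {1..nat \<lfloor>1/200 * real (card V)\<rfloor>} - (P1 \<union> P2 \<union> {p2, p3})" and p1S: "p1 \<in> S"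
    and inj\<sigma>: "inj_on \<sigma> S" and \<sigma>V: "\<sigma> ` S \<subseteq> V"
  shows "cond_prob V
            (\<lambda>\<pi>. \<exists>\<pi>' \<in> orderings V. (\<forall>i\<in>S \<union> {1..Max P2} \<union> {p2, p3}. \<pi>' i = \<pi> i) \<and> dep_path E (card V) \<pi>' p1 p2 p3)
            (\<lambda>\<pi>. \<forall>i\<in>S. \<pi> i = \<sigma> i)
          \<le> (1 - 1/200) / (exp 1 * real l)\<^sup>2"
proof -
  define n where "n = card V"
  define b where "b = nat \<lfloor>1/200 * real n\<rfloor>"
  have x0: "0 \<le> 1/200 * real n" by simp
  have "real b = real_of_int \<lfloor>1/200 * real n\<rfloor>" unfolding b_def using x0 by simp
  then have bn: "real b \<le> 1/200 * real n" using of_int_floor_le[of "1/200 * real n"] by simp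
  have Bdef: "{1..nat \<lfloor>1/200 * real (card V)\<rfloor>} = {1..b}" unfolding b_def n_def ..
  have b1: "1 \<le> b" using p1B Bdef by auto
  have n0: "0 < n" using bn b1 by (cases n) auto
  have "real b < real n" using bn n0 by simp
  then have bltn: "b < n" by simp
  have finP1: "finite P1" by (rule finite_subset[OF _ finite_atLeastAtMost]) (use P1B Bdef in simp)
  have finP2: "finite P2" by (rule finite_subset[OF _ finite_atLeastAtMost]) (use P2B Bdef in simp)
  have P1ne: "P1 \<noteq> {}" using cP1 l by auto
  have P2ne: "P2 \<noteq> {}" using cP2 l by auto
  define qA where "qA = Max P1"
  define t2 where "t2 = Max P2"
  have qA_in: "qA \<in> P1" unfolding qA_def by (rule Max_in[OF finP1 P1ne])
  have t2_in: "t2 \<in> P2" unfolding t2_def by (rule Max_in[OF finP2 P2ne])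
  have qA1: "1 \<le> qA" using qA_in P1B Bdef by auto
  have minle: "Min P2 \<le> t2" by (rule Min_le[OF finP2 t2_in])
  have qAt2: "qA < t2" using mm minle unfolding qA_def by simp
  have t2p1: "t2 < p1" using m2 t2_def by simp
  have p1b: "p1 \<le> b" using p1B Bdef by simp
  have p2b: "p2 \<le> b" using p2B Bdef by simp
  have p3b: "p3 \<le> b" using p3B Bdef by simp
  have p3n: "p3 \<le> n" using p3b bltn by simp
  have SsubB: "S \<subseteq> {1..b}" using SB Bdef by auto
  have Ssub: "S \<subseteq> {1..card V}" using SsubB bltn n_def by auto
  have p2S: "p2 \<notin> S" "p3 \<notin> S" using SB by auto
  interpret C: ctx2 V S \<sigma> E p1
    by unfold_locales (use finV Ssub sym irr in auto)
  have sA: "l \<le> C.rcnt 1 qA"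
  proof -
    have "P1 \<subseteq> {i \<in> {1..qA}. i \<notin> S}"
    proof
      fix x assume x: "x \<in> P1"
      have "x \<le> qA" unfolding qA_def by (rule Max_ge[OF finP1 x])
      moreover have "1 \<le> x" using x P1B Bdef by auto
      moreover have "x \<notin> S" using x SB by auto
      ultimately show "x \<in> {i \<in> {1..qA}. i \<notin> S}" by simp
    qed
    then have "card P1 \<le> card {i \<in> {1..qA}. i \<notin> S}" by (rule card_mono[rotated]) simp
    then show ?thesis unfolding C.rcnt_def using cP1 by simp
  qed
  have sB: "l \<le> C.rcnt (Suc qA) t2"
  proof -
    have "P2 \<subseteq> {i \<in> {Suc qA..t2}. i \<notin> S}"
    proof
      fix x assume x: "x \<in> P2"
      have "x \<le> t2" unfolding t2_def by (rule Max_ge[OF finP2 x])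
      moreover have "Min P2 \<le> x" by (rule Min_le[OF finP2 x])
      moreover have "x \<notin> S" using x SB by auto
      ultimately show "x \<in> {i \<in> {Suc qA..t2}. i \<notin> S}" using mm unfolding qA_def by simp
    qed
    then have "card P2 \<le> card {i \<in> {Suc qA..t2}. i \<notin> S}" by (rule card_mono[rotated]) simp
    then show ?thesis unfolding C.rcnt_def using cP2 by simp
  qed
  define sa where "sa = C.rcnt 1 qA"
  define sb where "sb = C.rcnt (Suc qA) t2"
  have sa1: "1 \<le> sa" using sA l sa_def by simp
  have sb1: "1 \<le> sb" using sB l sb_def by simp
  define A where "A \<pi> = (\<exists>\<pi>'\<in>orderings V. (\<forall>i\<in>S \<union> {1..Max P2} \<union> {p2, p3}. \<pi>' i = \<pi> i) \<and> dep_path E (card V) \<pi>' p1 p2 p3)" for \<pi>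
  define Bc where "Bc \<pi> = (\<forall>i\<in>S. \<pi> i = \<sigma> i)" for \<pi>
  have eqOm: "{\<pi> \<in> orderings V. Bc \<pi>} = C.Om" unfolding Bc_def C.Om_def ..
  have eqAB: "{\<pi> \<in> orderings V. A \<pi> \<and> Bc \<pi>} = {\<pi> \<in> C.Om. A \<pi>}" unfolding Bc_def C.Om_def by auto
  define Ev where "Ev = {\<pi>\<in>C.Om. \<pi> p2 \<in> C.KK \<pi> (Suc t2) \<and> \<pi> p3 \<in> C.LL \<pi> (Suc t2) (\<pi> p2)}"
  have subEv: "{\<pi> \<in> C.Om. A \<pi>} \<subseteq> Ev"
  proof
    fix \<pi> assume h: "\<pi> \<in> {\<pi> \<in> C.Om. A \<pi>}"
    then have \<pi>: "\<pi> \<in> C.Om" and "A \<pi>" by auto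
    then obtain \<pi>' where \<pi>': "\<pi>' \<in> orderings V" "\<forall>i\<in>S \<union> {1..t2} \<union> {p2, p3}. \<pi>' i = \<pi> i"
      "dep_path E (card V) \<pi>' p1 p2 p3"
      unfolding A_def t2_def by blast
    have "\<pi> p2 \<in> C.KK \<pi> (Suc t2) \<and> \<pi> p3 \<in> C.LL \<pi> (Suc t2) (\<pi> p2)"
      by (rule C.event_imp[OF \<pi> \<pi>'(1) \<pi>'(2) \<pi>'(3) t2p1]) (use p3n n_def p1S p2S in auto)
    then show "\<pi> \<in> Ev" unfolding Ev_def using \<pi> by simp
  qed
  have finEv: "finite Ev" unfolding Ev_def using C.finite_Om by simp
  have cardA: "card {\<pi> \<in> C.Om. A \<pi>} \<le> card Ev" by (rule card_mono[OF finEv subEv])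
  have cp_eq: "cond_prob V A Bc = real (card {\<pi> \<in> C.Om. A \<pi>}) / real (card C.Om)"
    unfolding cond_prob_def eqAB eqOm ..
  have rhs0: "0 \<le> (1 - 1/200) / (exp 1 * real l)\<^sup>2" by simp
  have "cond_prob V A Bc \<le> (1 - 1/200) / (exp 1 * real l)\<^sup>2"
  proof (cases "card C.Om = 0")
    case True
    then show ?thesis unfolding cp_eq using rhs0 by simp
  next
    case False
    then have cO: "real (card C.Om) > 0" by simp
    define mlo where "mlo = n - b"
    have cardsub: "card X \<le> b" if "X \<subseteq> {1..b}" for X
      using card_mono[OF finite_atLeastAtMost that] by simp
    have s1: "({1..<Suc t2} \<union> {p2}) \<union> S \<subseteq> {1..b}" using t2p1 p1b p2b SsubB o12 by auto
    have s2: "{1..<Suc t2} \<union> S \<subseteq> {1..b}" using t2p1 p1b SsubB by auto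
    have m1: "mlo \<le> card V - card (({1..<Suc t2} \<union> {p2}) \<union> S)"
      unfolding mlo_def n_def using cardsub[OF s1] by (rule diff_le_mono2)
    have m2': "mlo \<le> card V - card ({1..<Suc t2} \<union> S)"
      unfolding mlo_def n_def using cardsub[OF s2] by (rule diff_le_mono2)
    have mpos: "0 < mlo" unfolding mlo_def using bltn by simp
    have fc: "real (card Ev) \<le> (\<Sum>\<pi>\<in>C.Om. C.YY 0 \<pi> (Suc t2)) / (real mlo * real mlo)"
      unfolding Ev_def by (rule C.final_count) (use t2p1 o12 o23 p3n n_def p2S mpos m1 m2' in auto)
    define Psv where "Psv = Psi (C.gam sb) (real (card V) / (exp 1 * real sb) * (real (card V) / (exp 1 * real sa)))"
    have zb: "(\<Sum>\<pi>\<in>C.Om. C.YY 0 \<pi> (Suc t2)) \<le> real (card C.Om) * Psv"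
      unfolding Psv_def sa_def sb_def
      by (rule C.Z_bound) (use qA1 qAt2 t2p1 p1b bltn n_def n0 sa1 sb1 sa_def sb_def in auto)
    have mm2: "real mlo * real mlo > 0" using mpos by simp
    have "cond_prob V A Bc \<le> real (card Ev) / real (card C.Om)"
      unfolding cp_eq using cardA cO by (simp add: divide_right_mono)
    also have "\<dots> \<le> ((\<Sum>\<pi>\<in>C.Om. C.YY 0 \<pi> (Suc t2)) / (real mlo * real mlo)) / real (card C.Om)"
      by (rule divide_right_mono) (use fc cO in auto)
    also have "\<dots> \<le> (real (card C.Om) * Psv / (real mlo * real mlo)) / real (card C.Om)"
      using zb cO mm2 by (intro divide_right_mono) auto
    also have "\<dots> = Psv / (real mlo * real mlo)" using cO by simp
    also have "\<dots> \<le> (1 - 1/200) / (exp 1 * real l)\<^sup>2"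
    proof -
      have pe: "Psv = (real n)^2 / ((exp 1)^2 * real sa * real sb + exp 1 * real sb * (real sb + 1) / 2)"
      proof -
        have "C.gam sb = exp 1 * real sb * (1 + real sb) / (2 * (real n)^2)"
          unfolding C.gam_def n_def by simp
        then show ?thesis unfolding Psv_def n_def[symmetric]
          by (simp only:) (rule psi_eval, use sa1 sb1 n0 in auto)
      qed
      have mb: "199/200 * real n \<le> real mlo" unfolding mlo_def using bn bltn by (simp add: of_nat_diff)
      have "((real n)^2 / ((exp 1)^2 * real sa * real sb + exp 1 * real sb * (real sb + 1) / 2)) / (real mlo)^2
           \<le> (1 - 1/200) / (exp 1 * real l)^2"
        by (rule arith_final) (use exp_le sA sB l n0 mb sa_def sb_def in auto)
      then show ?thesis unfolding pe by (simp add: power2_eq_square)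
    qed
    finally show ?thesis .
  qed
  then show ?thesis unfolding A_def Bc_def .
qed

theorem lemma2p3:
  shows "\<exists>\<beta> \<epsilon> :: real. 0 < \<beta> \<and> \<beta> < 0.01 \<and> 0 < \<epsilon> \<and> \<epsilon> < 0.01 \<and>
    (\<forall>(V :: nat set) (E :: nat \<Rightarrow> nat \<Rightarrow> bool) p1 p2 p3 (P1 :: nat set) P2 l S (\<sigma> :: nat \<Rightarrow> nat).
      finite V \<longrightarrow> (\<forall>u v. E u v \<longrightarrow> E v u) \<longrightarrow> (\<forall>v. \<not> E v v) \<longrightarrow>
      (let n = card V; B = {1..nat \<lfloor>\<beta> * real n\<rfloor>} in
        p1 < p2 \<longrightarrow> p2 < p3 \<longrightarrow> p1 \<in> B \<longrightarrow> p2 \<in> B \<longrightarrow> p3 \<in> B \<longrightarrow>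
        P1 \<subseteq> B \<longrightarrow> P2 \<subseteq> B \<longrightarrow> P1 \<inter> P2 = {} \<longrightarrow>
        card P1 = l \<longrightarrow> card P2 = l \<longrightarrow> l \<ge> 10000 \<longrightarrow>
        Max P1 < Min P2 \<longrightarrow> Max P2 < p1 \<longrightarrow>
        S \<subseteq> B - (P1 \<union> P2 \<union> {p2, p3}) \<longrightarrow> p1 \<in> S \<longrightarrow>
        inj_on \<sigma> S \<longrightarrow> \<sigma> ` S \<subseteq> V \<longrightarrow>
        (let t2 = Max P2; S2 = S \<union> {1..t2} \<union> {p2, p3} in
          cond_prob V
            (\<lambda>\<pi>. \<exists>\<pi>' \<in> orderings V. (\<forall>i\<in>S2. \<pi>' i = \<pi> i) \<and> dep_path E n \<pi>' p1 p2 p3)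
            (\<lambda>\<pi>. \<forall>i\<in>S. \<pi> i = \<sigma> i)
          \<le> (1 - \<epsilon>) / (exp 1 * real l)\<^sup>2)))"
  apply (rule exI[of _ "1/200"], rule exI[of _ "1/200"])
  apply (unfold Let_def)
  apply (intro conjI)
      apply simp
     apply simp
    apply simp
   apply simp
  apply (intro allI impI)
  apply (rule main)
                      apply assumption+
  done

end
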